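(* Let $a\ge 0$ and, for $x_i\in\mathbb{R}$, let $P_\pm^a(x_i)$ be the smallest $x>x_i$ at which the solution $Y_\pm$ of $y'=-ay-\sin(\pi\omega_\pm x)$, $Y_\pm(x_i)=0$, vanishes, where $\omega_+=3/2$, $\omega_-=1/2$. Let $P(x,a)=P_+^a(P_-^a(x))$, $I_-=(0,\tfrac23)$ and $\Delta(x,a)=P(x,a)-(x+4)$. Then there exists $a_l>0$ (small) such that the roots of $\Delta(x,a)=0$ define a function $x=x(a)$ for all $a\in(0,a_l)$, which satisfies $x(0)=x_0$, where $x_0\in I_-$ is a solution of $$\frac{32}{9\pi}+\frac{2x_0}{3}\cot\frac{3\pi x_0}{2}+(4-2x_0)\cot\frac{\pi x_0}{2}=0.$$
   Context: For $a=0$ the maps are $P_\pm^0(x_i)=\frac{2}{\omega_\pm}\left(1+\lfloor\omega_\pm x_i\rfloor\right)-x_i$, so that $P(x,0)=x+4$ for $x\in I_-$. The map $P(\cdot,a)$ is the return map of the piecewise system $\dot y=-ay-\sin(\pi\omega x)$ with $\omega=3/2$ for $y>0$ and $\omega=1/2$ for $y<0$, for an orbit leaving $y=0$ into $y<0$ at $x$, returning to $y=0$, then traversing $y>0$ and returning to $y=0$. *)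

theory Defs
  imports "HOL-Analysis.Analysis"
begin

text \<open>The solution Y of y' = -a y - sin(pi w x) with Y(xi) = 0 (unique, linear ODE).\<close>
definition ode_sol :: "real \<Rightarrow> real \<Rightarrow> real \<Rightarrow> real \<Rightarrow> real" where
  "ode_sol w a xi = (THE Y. Y xi = 0 \<and>
      (\<forall>x. (Y has_real_derivative (- a * Y x - sin (pi * w * x))) (at x)))"

definition first_zero :: "real \<Rightarrow> real \<Rightarrow> real \<Rightarrow> real" where
  "first_zero w a xi = (LEAST x. x > xi \<and> ode_sol w a xi x = 0)"

definition P_plus :: "real \<Rightarrow> real \<Rightarrow> real" where
  "P_plus a xi = first_zero (3/2) a xi"

definition P_minus :: "real \<Rightarrow> real \<Rightarrow> real" where
  "P_minus a xi = first_zero (1/2) a xi"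

definition Pmap :: "real \<Rightarrow> real \<Rightarrow> real" where
  "Pmap x a = P_plus a (P_minus a x)"

definition I_minus :: "real set" where
  "I_minus = {0<..<2/3}"

definition Delta :: "real \<Rightarrow> real \<Rightarrow> real" where
  "Delta x a = Pmap x a - (x + 4)"

end

theory Submission
  imports Defs
begin


definition hh :: "real \<Rightarrow> real \<Rightarrow> real \<Rightarrow> real" where
  "hh w a t = exp (a*t) * (pi*w*cos (pi*w*t) - a* sin (pi*w*t))"

definition solf :: "real \<Rightarrow> real \<Rightarrow> real \<Rightarrow> real \<Rightarrow> real" where
  "solf w a xi x = exp (-a*x) * (hh w a x - hh w a xi) / (a^2 + (pi*w)^2)"

lemma hh_deriv: "(hh w a has_real_derivative (-(a^2+(pi*w)^2) * exp (a*t) * sin (pi*w*t))) (at t)"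
  unfolding hh_def
  by (auto intro!: derivative_eq_intros simp: algebra_simps power2_eq_square)

lemma solf_deriv:
  assumes "w > 0"
  shows "(solf w a xi has_real_derivative (- a * solf w a xi x - sin (pi * w * x))) (at x)"
proof -
  define c where "c = a^2 + (pi*w)^2"
  have pos: "c > 0" using assms by (simp add: add_nonneg_pos c_def)
  have e: "exp (-a*x) * exp (a*x) = 1" by (simp add: exp_minus)
  have d1: "((\<lambda>x. exp (-a*x) * (hh w a x - hh w a xi)) has_real_derivative
     (-a * exp (-a*x) * (hh w a x - hh w a xi) + exp (-a*x) * (-c * exp (a*x) * sin (pi*w*x)))) (at x)"
    apply (rule DERIV_cong)
     apply (rule derivative_eq_intros hh_deriv refl)+
    apply (simp add: c_def algebra_simps)
    done
  have "(solf w a xi has_real_derivative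
     (-a * exp (-a*x) * (hh w a x - hh w a xi) + exp (-a*x) * (-c * exp (a*x) * sin (pi*w*x))) / c) (at x)"
    using DERIV_cdivide[OF d1, of c] unfolding solf_def c_def by simp
  moreover have "(-a * exp (-a*x) * (hh w a x - hh w a xi) + exp (-a*x) * (-c * exp (a*x) * sin (pi*w*x))) / c
      = - a * solf w a xi x - sin (pi * w * x)"
  proof -
    have "exp (-a*x) * (-c * exp (a*x) * sin (pi*w*x)) = -c * sin (pi*w*x)"
      using e by (simp add: algebra_simps)
    then show ?thesis using pos unfolding solf_def c_def[symmetric]
      by (simp add: field_simps)
  qed
  ultimately show ?thesis by simp
qed

lemma ode_sol_eq:
  assumes "w > 0"
  shows "ode_sol w a xi = solf w a xi"
  unfolding ode_sol_def
proof (rule the_equality)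
  show "solf w a xi xi = 0 \<and> (\<forall>x. (solf w a xi has_real_derivative - a * solf w a xi x - sin (pi * w * x)) (at x))"
    using solf_deriv[OF assms] by (simp add: solf_def)
next
  fix Y assume Y: "Y xi = 0 \<and> (\<forall>x. (Y has_real_derivative - a * Y x - sin (pi * w * x)) (at x))"
  define Z where "Z x = exp (a*x) * (Y x - solf w a xi x)" for x
  have "\<And>x. (Z has_real_derivative 0) (at x)"
  proof -
    fix x
    have "(Z has_real_derivative (a * exp (a*x) * (Y x - solf w a xi x) + exp (a*x) *
        ((- a * Y x - sin (pi * w * x)) - (- a * solf w a xi x - sin (pi * w * x))))) (at x)"
      unfolding Z_def using Y solf_deriv[OF assms]
      by (auto intro!: derivative_eq_intros)
    then show "(Z has_real_derivative 0) (at x)" by (simp add: algebra_simps)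
  qed
  then have "\<And>x. Z x = Z xi" by (metis DERIV_isconst_all)
  moreover have "Z xi = 0" using Y by (simp add: Z_def solf_def)
  ultimately show "Y = solf w a xi" by (auto simp: Z_def fun_eq_iff)
qed

lemma ode_zero_iff:
  assumes "w > 0"
  shows "ode_sol w a xi x = 0 \<longleftrightarrow> hh w a x = hh w a xi"
proof -
  have pos: "a^2 + (pi*w)^2 > 0" using assms by (simp add: add_nonneg_pos)
  then show ?thesis using ode_sol_eq[OF assms] assms by (simp add: solf_def)
qed

lemma first_zero_eq:
  assumes "w > 0" "xi < r" "hh w a r = hh w a xi"
    and "\<And>t. xi < t \<Longrightarrow> t < r \<Longrightarrow> hh w a t \<noteq> hh w a xi"
  shows "first_zero w a xi = r"
  unfolding first_zero_def
proof (rule Least_equality)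
  show "xi < r \<and> ode_sol w a xi r = 0" using assms ode_zero_iff by simp
next
  fix y assume "xi < y \<and> ode_sol w a xi y = 0"
  then show "r \<le> y" using assms ode_zero_iff by force
qed


lemma hh_cont: "continuous_on S (hh w a)"
  unfolding hh_def by (intro continuous_intros)

lemma hh_inc:
  assumes "w > 0" "\<And>t. l < t \<Longrightarrow> t < r \<Longrightarrow> sin (pi*w*t) < 0"
  shows "strict_mono_on {l..r} (hh w a)"
proof (rule strict_mono_onI)
  fix x y assume xy: "x \<in> {l..r}" "y \<in> {l..r}" "x < y"
  have pos: "a^2 + (pi*w)^2 > 0" using assms by (simp add: add_nonneg_pos)
  show "hh w a x < hh w a y"
  proof (rule DERIV_pos_imp_increasing_open[OF \<open>x<y\<close>])
    fix t assume "x < t" "t < y"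
    then have "sin (pi*w*t) < 0" using xy assms(2) by auto
    then have "0 < (a^2+(pi*w)^2) * exp (a*t) * (- sin (pi*w*t))"
      using pos by (intro mult_pos_pos) auto
    then have "-(a^2+(pi*w)^2) * exp (a*t) * sin (pi*w*t) > 0" by (simp only: mult_minus_left mult_minus_right)
    then show "\<exists>d. (hh w a has_real_derivative d) (at t) \<and> 0 < d" using hh_deriv by blast
  qed (rule hh_cont)
qed

lemma hh_dec:
  assumes "w > 0" "\<And>t. l < t \<Longrightarrow> t < r \<Longrightarrow> sin (pi*w*t) > 0"
    and "l \<le> x" "x < y" "y \<le> r"
  shows "hh w a y < hh w a x"
proof -
  have pos: "a^2 + (pi*w)^2 > 0" using assms by (simp add: add_nonneg_pos)
  show ?thesis
  proof (rule DERIV_neg_imp_decreasing_open[OF \<open>x<y\<close>])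
    fix t assume "x < t" "t < y"
    then have "sin (pi*w*t) > 0" using assms by auto
    then have "0 < (a^2+(pi*w)^2) * exp (a*t) * sin (pi*w*t)"
      using pos by (intro mult_pos_pos) auto
    then have "-(a^2+(pi*w)^2) * exp (a*t) * sin (pi*w*t) < 0" by (simp only: mult_minus_left mult_minus_right)
    then show "\<exists>d. (hh w a has_real_derivative d) (at t) \<and> d < 0" using hh_deriv by blast
  qed (rule hh_cont)
qed

lemma sin4: "sin (x + 4*pi) = sin x"
proof - have "x + 4*pi = (x + 2*pi) + 2*pi" by simp
  then show ?thesis by (simp only: sin_periodic) qed
lemma cos4: "cos (x + 4*pi) = cos x"
proof - have "x + 4*pi = (x + 2*pi) + 2*pi" by simp
  then show ?thesis by (simp only: cos_periodic) qed
lemma sin6: "sin (x + 6*pi) = sin x"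
proof - have "x + 6*pi = (x + 4*pi) + 2*pi" by simp
  then show ?thesis by (simp only: sin_periodic sin4) qed
lemma cos6: "cos (x + 6*pi) = cos x"
proof - have "x + 6*pi = (x + 4*pi) + 2*pi" by simp
  then show ?thesis by (simp only: cos_periodic cos4) qed

lemma s1pos: "0 < t \<Longrightarrow> t < 2 \<Longrightarrow> sin (pi*(1/2)*t) > 0"
  by (rule sin_gt_zero) auto

lemma s1neg: assumes "2 < t" "t < 4" shows "sin (pi*(1/2)*t) < 0"
proof -
  define y where "y = pi*(1/2)*t - pi"
  have "0 < y" "y < pi" using assms by (auto simp: y_def)
  then have "sin y > 0" by (rule sin_gt_zero)
  moreover have e: "pi*(1/2)*t = y + pi" by (simp add: y_def)
  ultimately show ?thesis by (simp only: e sin_periodic_pi)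
qed

lemma s2neg: assumes "10/3 < t" "t < 4" shows "sin (pi*(3/2)*t) < 0"
proof -
  define y where "y = pi*(3/2)*t - 5*pi"
  have "0 < y" "y < pi" using assms by (auto simp: y_def)
  then have "sin y > 0" by (rule sin_gt_zero)
  moreover have e: "pi*(3/2)*t = (y + pi) + 4*pi" by (simp add: y_def)
  ultimately show ?thesis by (simp only: e sin4 sin_periodic_pi)
qed

lemma s2pos: assumes "4 < t" "t < 14/3" shows "sin (pi*(3/2)*t) > 0"
proof -
  define y where "y = pi*(3/2)*t - 6*pi"
  have "0 < y" "y < pi" using assms by (auto simp: y_def)
  then have "sin y > 0" by (rule sin_gt_zero)
  moreover have e: "pi*(3/2)*t = y + 6*pi" by (simp add: y_def)
  ultimately show ?thesis by (simp only: e sin6)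
qed

lemma h1_inc: "strict_mono_on {2..4} (hh (1/2) a)"
  by (rule hh_inc) (simp, erule (1) s1neg)
lemma h1_dec: "0 \<le> x \<Longrightarrow> x < y \<Longrightarrow> y \<le> 2 \<Longrightarrow> hh (1/2) a y < hh (1/2) a x"
  by (rule hh_dec[where l=0 and r=2]) (simp, erule (1) s1pos, simp_all)
lemma h2_inc: "strict_mono_on {10/3..4} (hh (3/2) a)"
  by (rule hh_inc) (simp, erule (1) s2neg)
lemma h2_dec: "4 \<le> x \<Longrightarrow> x < y \<Longrightarrow> y \<le> 14/3 \<Longrightarrow> hh (3/2) a y < hh (3/2) a x"
  by (rule hh_dec[where l=4 and r="14/3"]) (simp, erule (1) s2pos, simp_all)

lemma h1_refl: "hh (1/2) a (4 - x + d) = exp (a*(4-x+d)) * (pi/2 * cos (pi*x/2 - pi*d/2) + a * sin (pi*x/2 - pi*d/2))"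
proof -
  have e: "pi*(1/2)*(4-x+d) = -(pi*x/2 - pi*d/2) + 2*pi" by (simp add: algebra_simps)
  have c: "cos (pi*(1/2)*(4-x+d)) = cos (pi*x/2 - pi*d/2)" by (simp only: e cos_periodic cos_minus)
  have s: "sin (pi*(1/2)*(4-x+d)) = - sin (pi*x/2 - pi*d/2)" by (simp only: e sin_periodic sin_minus)
  show ?thesis unfolding hh_def c s by simp
qed
lemma h1_x: "hh (1/2) a x = exp (a*x) * (pi/2 * cos (pi*x/2) - a * sin (pi*x/2))"
  unfolding hh_def by simp
lemma h2_x4: "hh (3/2) a (x+4) = exp (a*(x+4)) * (3*pi/2 * cos (3*pi*x/2) - a * sin (3*pi*x/2))"
proof -
  have e: "pi*(3/2)*(x+4) = 3*pi*x/2 + 6*pi" by (simp add: algebra_simps)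
  have c: "cos (pi*(3/2)*(x+4)) = cos (3*pi*x/2)" by (simp only: e cos6)
  have s: "sin (pi*(3/2)*(x+4)) = sin (3*pi*x/2)" by (simp only: e sin6)
  show ?thesis unfolding hh_def c s by simp
qed
lemma h2_refl: "hh (3/2) a (4 - x + d) = exp (a*(4-x+d)) * (3*pi/2 * cos (3*pi*x/2 - 3*pi*d/2) + a * sin (3*pi*x/2 - 3*pi*d/2))"
proof -
  have e: "pi*(3/2)*(4-x+d) = -(3*pi*x/2 - 3*pi*d/2) + 6*pi" by (simp add: field_simps)
  have c: "cos (pi*(3/2)*(4-x+d)) = cos (3*pi*x/2 - 3*pi*d/2)" by (simp only: e cos6 cos_minus)
  have s: "sin (pi*(3/2)*(4-x+d)) = - sin (3*pi*x/2 - 3*pi*d/2)" by (simp only: e sin6 sin_minus)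
  show ?thesis unfolding hh_def c s by simp
qed


lemma cos_alpha_bounds:
  assumes "x \<in> {1/2..13/20}"
  shows "1/2 \<le> cos (pi*x/2)" "cos (pi*x/2) \<le> sqrt 2 / 2" "sqrt 2 / 2 \<le> sin (pi*x/2)" "sin (pi*x/2) \<le> sqrt 3 / 2"
proof -
  have x: "pi/4 \<le> pi*x/2" "pi*x/2 \<le> pi/3" using assms by (auto simp: field_simps)
  show "1/2 \<le> cos (pi*x/2)" using cos_monotone_0_pi_le[of "pi*x/2" "pi/3"] x cos_60 by (simp add: )
  show "cos (pi*x/2) \<le> sqrt 2 / 2" using cos_monotone_0_pi_le[of "pi/4" "pi*x/2"] x cos_45 by simp
  show "sqrt 2 / 2 \<le> sin (pi*x/2)" using sin_monotone_2pi_le[of "pi/4" "pi*x/2"] x sin_45 by simp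
  show "sin (pi*x/2) \<le> sqrt 3 / 2" using sin_monotone_2pi_le[of "pi*x/2" "pi/3"] x sin_60 by simp
qed

lemma h1_pos:
  assumes "x \<in> {1/2..13/20}" "0 \<le> a" "a \<le> 1/100"
  shows "hh (1/2) a x > 0"
proof -
  have c: "1/2 \<le> cos (pi*x/2)" using cos_alpha_bounds assms by auto
  have "a * sin (pi*x/2) \<le> 1/100" using assms sin_le_one[of "pi*x/2"]
    by (metis dual_order.trans mult_left_le mult_le_one sin_le_one)
  moreover have "pi/2 * cos (pi*x/2) \<ge> pi/4" using c by simp
  ultimately have "pi/2 * cos (pi*x/2) - a * sin (pi*x/2) > 0" using pi_gt3 by linarith
  then show ?thesis unfolding h1_x by simp
qed

lemma h1_2: "hh (1/2) a 2 = - (pi/2) * exp (2*a)"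
  unfolding hh_def by (simp add: mult.commute)
lemma h1_4: "hh (1/2) a 4 = (pi/2) * exp (4*a)"
proof -
  have "pi*(1/2)*4 = 2*pi" by simp
  then show ?thesis unfolding hh_def by (simp add: mult.commute)
qed
lemma h2_4: "hh (3/2) a 4 = (3*pi/2) * exp (4*a)"
proof -
  have e: "pi*(3/2)*4 = 0 + 6*pi" by simp
  have "cos (pi*(3/2)*4) = 1" "sin (pi*(3/2)*4) = 0" by (simp_all only: e cos6 sin6) simp_all
  then show ?thesis unfolding hh_def by (simp add: mult.commute)
qed
lemma h2_143: "hh (3/2) a (14/3) = -(3*pi/2) * exp (14/3*a)"
proof -
  have e: "pi*(3/2)*(14/3) = pi + 6*pi" by simp
  have "cos (pi*(3/2)*(14/3)) = -1" "sin (pi*(3/2)*(14/3)) = 0" by (simp_all only: e cos6 sin6) simp_all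
  then show ?thesis unfolding hh_def by (simp add: mult.commute)
qed

lemma Pm_char:
  assumes x: "x \<in> {1/2..13/20}" and a: "0 \<le> a" "a \<le> 1/100"
  shows "2 < P_minus a x \<and> P_minus a x < 4 \<and> hh (1/2) a (P_minus a x) = hh (1/2) a x"
proof -
  have hp: "hh (1/2) a x > 0" using h1_pos assms by blast
  have "hh (1/2) a x \<le> exp (a*x) * (pi/2 * cos (pi*x/2))"
    unfolding h1_x using a sin_ge_zero[of "pi*x/2"] x by (auto intro!: mult_left_mono simp: field_simps)
  also have "\<dots> < exp (4*a) * (pi/2)"
  proof -
    have "cos (pi*x/2) < 1" using cos_alpha_bounds(2)[OF x] sqrt2_less_2 by linarith
    moreover have "exp (a*x) \<le> exp (4*a)" using mult_left_mono[of x 4 a] x a by (simp add: mult.commute)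
    ultimately show ?thesis using cos_alpha_bounds(1)[OF x]
      by (intro mult_le_less_imp_less) auto
  qed
  finally have hl: "hh (1/2) a x < hh (1/2) a 4" unfolding h1_4 by (simp add: mult.commute)
  have "pi*exp(2*a)/2 > 0" by simp
  moreover have "hh (1/2) a 2 = -(pi*exp(2*a)/2)" by (simp add: h1_2)
  ultimately have h2: "hh (1/2) a 2 < hh (1/2) a x" using hp by linarith
  have "\<exists>r. 2 \<le> r \<and> r \<le> 4 \<and> hh (1/2) a r = hh (1/2) a x"
    by (rule IVT') (use hl h2 hh_cont in auto)
  then obtain r where r: "2 \<le> r" "r \<le> 4" "hh (1/2) a r = hh (1/2) a x" by blast
  have r2: "2 < r" "r < 4" using r h2 hl by (auto simp: le_less)
  have "first_zero (1/2) a x = r"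
  proof (rule first_zero_eq)
    show "x < r" using x r2 by auto
    show "hh (1/2) a r = hh (1/2) a x" by (rule r(3))
    fix t assume t: "x < t" "t < r"
    show "hh (1/2) a t \<noteq> hh (1/2) a x"
    proof (cases "t \<le> 2")
      case True then show ?thesis using h1_dec[of x t a] x t by auto
    next
      case False
      then have "hh (1/2) a t < hh (1/2) a r"
        using h1_inc[of a] t r2 by (auto simp: strict_mono_on_def)
      then show ?thesis using r by auto
    qed
  qed simp
  then show ?thesis using r r2 by (simp add: P_minus_def)
qed

lemma Pp_char:
  assumes y: "10/3 < y" "y < 4" and a: "0 < a"
  shows "4 < P_plus a y \<and> P_plus a y < 14/3 \<and> hh (3/2) a (P_plus a y) = hh (3/2) a y"
proof -
  have hl: "hh (3/2) a y < hh (3/2) a 4" using h2_inc[of a] y by (auto simp: strict_mono_on_def)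
  have "sin (pi*(3/2)*y) < 0" using s2neg y by blast
  then have "- a * sin (pi*(3/2)*y) \<ge> 0" using a by (simp add: mult_le_0_iff)
  then have A: "exp (a*y) * (pi*(3/2)*cos (pi*(3/2)*y)) \<le> hh (3/2) a y"
    unfolding hh_def by (intro mult_left_mono) auto
  have "pi*(3/2)*(-1) \<le> pi*(3/2)*cos (pi*(3/2)*y)"
    using cos_ge_minus_one[of "pi*(3/2)*y"] by (intro mult_left_mono) auto
  then have B: "exp (a*y) * (-(3*pi/2)) \<le> exp (a*y) * (pi*(3/2)*cos (pi*(3/2)*y))"
    by (intro mult_left_mono) auto
  from B A have AB: "exp (a*y) * (-(3*pi/2)) \<le> hh (3/2) a y" by (rule order.trans)
  have "exp (a*y) < exp (14/3*a)" using a y by simp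
  then have M: "exp (14/3*a) * (-(3*pi/2)) < exp (a*y) * (-(3*pi/2))"
    by (intro mult_strict_right_mono_neg) auto
  have "hh (3/2) a (14/3) = exp (14/3*a) * (-(3*pi/2))" unfolding h2_143 by simp
  then have hu: "hh (3/2) a (14/3) < hh (3/2) a y" using AB M by linarith
  have "\<exists>r. 4 \<le> r \<and> r \<le> 14/3 \<and> hh (3/2) a r = hh (3/2) a y"
    by (rule IVT2') (use hl hu hh_cont in auto)
  then obtain r where r: "4 \<le> r" "r \<le> 14/3" "hh (3/2) a r = hh (3/2) a y" by blast
  have "r \<noteq> 4" using r(3) hl by auto
  moreover have "r \<noteq> 14/3"
  proof
    assume "r = 14/3"
    then have "hh (3/2) a r = hh (3/2) a (14/3)" by (rule arg_cong)
    then show False using r(3) hu by linarith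
  qed
  ultimately have r2: "4 < r" "r < 14/3" using r by auto
  have "first_zero (3/2) a y = r"
  proof (rule first_zero_eq)
    show "y < r" using y r2 by auto
    show "hh (3/2) a r = hh (3/2) a y" by (rule r(3))
    fix t assume t: "y < t" "t < r"
    show "hh (3/2) a t \<noteq> hh (3/2) a y"
    proof (cases "t \<le> 4")
      case True then have "hh (3/2) a y < hh (3/2) a t" 
        using h2_inc[of a] t y by (auto simp: strict_mono_on_def)
      then show ?thesis by auto
    next
      case False
      then have "hh (3/2) a r < hh (3/2) a t"
        using h2_dec[of t r a] t r2 by auto
      then show ?thesis using r by auto
    qed
  qed simp
  then show ?thesis using r r2 by (simp add: P_plus_def)
qed

lemma Delta_sign:
  assumes x: "x \<in> {1/2..13/20}" and a: "0 < a" "a \<le> 1/100"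
    and Y: "10/3 < P_minus a x" "P_minus a x < 4"
  defines "Phi \<equiv> hh (3/2) a (x+4) - hh (3/2) a (P_minus a x)"
  shows "(Delta x a = 0 \<longleftrightarrow> Phi = 0) \<and> (Delta x a > 0 \<longleftrightarrow> Phi > 0) \<and> (Delta x a < 0 \<longleftrightarrow> Phi < 0)"
proof -
  define z where "z = P_plus a (P_minus a x)"
  have z: "4 < z" "z < 14/3" "hh (3/2) a z = hh (3/2) a (P_minus a x)"
    using Pp_char[OF Y a(1)] by (auto simp: z_def)
  have D: "Delta x a = z - (x+4)" by (simp add: Delta_def Pmap_def z_def)
  have Ph: "Phi = hh (3/2) a (x+4) - hh (3/2) a z" using z by (simp add: Phi_def)
  have x4: "4 \<le> x+4" "x+4 \<le> 14/3" using x by auto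
  have gt: "z > x+4 \<Longrightarrow> Phi > 0" using h2_dec[of "x+4" z a] x4 z Ph by auto
  have lt: "z < x+4 \<Longrightarrow> Phi < 0" using h2_dec[of z "x+4" a] x4 z Ph by auto
  have eq: "z = x+4 \<Longrightarrow> Phi = 0" using Ph by simp
  consider "z > x+4" | "z < x+4" | "z = x+4" by linarith
  then show ?thesis
  proof cases
    case 1
    then have "Delta x a > 0" "Phi > 0" using gt D by auto
    then show ?thesis by auto
  next
    case 2
    then have "Delta x a < 0" "Phi < 0" using lt D by auto
    then show ?thesis by auto
  next
    case 3
    then have "Delta x a = 0" "Phi = 0" using eq D by auto
    then show ?thesis by auto
  qed
qed


lemma unif_pos:
  fixes D :: "real \<Rightarrow> real \<Rightarrow> real"
  assumes K: "compact K" and cont: "continuous_on ({0..1} \<times> K) (\<lambda>p. D (fst p) (snd p))"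
    and pos: "\<And>x. x \<in> K \<Longrightarrow> D 0 x > 0"
  shows "\<exists>al>0. \<forall>a\<in>{0..al}. \<forall>x\<in>K. D a x > 0"
proof (cases "K = {}")
  case True then show ?thesis by (intro exI[of _ 1]) auto
next
  case False
  have c0: "continuous_on K (D 0)"
  proof -
    have "continuous_on K ((\<lambda>p. D (fst p) (snd p)) \<circ> (\<lambda>x. (0::real, x)))"
      by (rule continuous_on_compose) (auto intro!: continuous_intros continuous_on_subset[OF cont])
    then show ?thesis by (simp add: o_def)
  qed
  obtain x0 where x0: "x0 \<in> K" "\<And>y. y \<in> K \<Longrightarrow> D 0 x0 \<le> D 0 y"
    using continuous_attains_inf[OF K False c0] by blast
  define m where "m = D 0 x0"
  have m: "m > 0" using pos x0 by (simp add: m_def)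
  have uc: "uniformly_continuous_on ({0..1} \<times> K) (\<lambda>p. D (fst p) (snd p))"
    by (rule compact_uniformly_continuous[OF cont]) (simp add: K compact_Times)
  obtain d where d: "d > 0" "\<And>p q. p \<in> {0..1} \<times> K \<Longrightarrow> q \<in> {0..1} \<times> K \<Longrightarrow> dist q p < d \<Longrightarrow>
      dist (D (fst q) (snd q)) (D (fst p) (snd p)) < m"
    using uc m unfolding uniformly_continuous_on_def by metis
  show ?thesis
  proof (intro exI[of _ "min (d/2) 1"] conjI ballI)
    show "0 < min (d/2) (1::real)" using d by simp
    fix a x assume a: "a \<in> {0..min (d/2) 1}" and x: "x \<in> K"
    have "dist (a, x) (0, x) < d" using a d by (simp add: dist_Pair_Pair dist_real_def)
    then have "dist (D a x) (D 0 x) < m" using d(2)[of "(0,x)" "(a,x)"] a x by auto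
    moreover have "D 0 x \<ge> m" using x0 x by (simp add: m_def)
    ultimately show "D a x > 0" by (simp add: dist_real_def abs_less_iff)
  qed
qed

lemma unif_deriv_pos:
  fixes f D :: "real \<Rightarrow> real \<Rightarrow> real"
  assumes K: "compact K" and cont: "continuous_on ({0..1} \<times> K) (\<lambda>p. D (fst p) (snd p))"
    and pos: "\<And>x. x \<in> K \<Longrightarrow> D 0 x > 0"
    and der: "\<And>x a. x \<in> K \<Longrightarrow> ((\<lambda>a. f a x) has_real_derivative D a x) (at a)"
    and f0: "\<And>x. x \<in> K \<Longrightarrow> f 0 x = 0"
  shows "\<exists>al>0. \<forall>a\<in>{0<..al}. \<forall>x\<in>K. f a x > 0"
proof -
  obtain al where al: "al > 0" "\<And>a x. a \<in> {0..al} \<Longrightarrow> x \<in> K \<Longrightarrow> D a x > 0"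
    using unif_pos[OF K cont pos] by blast
  show ?thesis
  proof (intro exI[of _ al] conjI ballI)
    fix a x assume a: "a \<in> {0<..al}" and x: "x \<in> K"
    have "(\<lambda>a. f a x) 0 < (\<lambda>a. f a x) a"
    proof (rule DERIV_pos_imp_increasing[of 0 a "\<lambda>a. f a x"])
      show "0 < a" using a by simp
      fix s assume "0 \<le> s" "s \<le> a"
      then show "\<exists>y. ((\<lambda>a. f a x) has_real_derivative y) (at s) \<and> 0 < y"
        using der[OF x, of s] al(2)[of s x] a x by auto
    qed
    then show "f a x > 0" using f0 x by simp
  qed (rule al)
qed

lemma unif_deriv_neg:
  fixes f D :: "real \<Rightarrow> real \<Rightarrow> real"
  assumes K: "compact K" and cont: "continuous_on ({0..1} \<times> K) (\<lambda>p. D (fst p) (snd p))"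
    and neg: "\<And>x. x \<in> K \<Longrightarrow> D 0 x < 0"
    and der: "\<And>x a. x \<in> K \<Longrightarrow> ((\<lambda>a. f a x) has_real_derivative D a x) (at a)"
    and f0: "\<And>x. x \<in> K \<Longrightarrow> f 0 x = 0"
  shows "\<exists>al>0. \<forall>a\<in>{0<..al}. \<forall>x\<in>K. f a x < 0"
proof -
  have "\<exists>al>0. \<forall>a\<in>{0<..al}. \<forall>x\<in>K. (\<lambda>a x. - f a x) a x > 0"
  proof (rule unif_deriv_pos[OF K, of "\<lambda>a x. - D a x"])
    show "continuous_on ({0..1} \<times> K) (\<lambda>p. - D (fst p) (snd p))"
      using cont by (rule continuous_on_minus)
  qed (use neg der f0 in \<open>auto intro: DERIV_minus\<close>)
  then show ?thesis by simp
qed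

lemma root_cont:
  fixes F :: "real \<Rightarrow> real \<Rightarrow> real" and g :: "real \<Rightarrow> real"
  assumes cont: "continuous_on (S \<times> {l..r}) (\<lambda>p. F (fst p) (snd p))"
    and mono: "\<And>p s t. p \<in> S \<Longrightarrow> l \<le> s \<Longrightarrow> s < t \<Longrightarrow> t \<le> r \<Longrightarrow> F p s < F p t"
    and sl: "\<And>p. p \<in> S \<Longrightarrow> F p l < 0" and sr: "\<And>p. p \<in> S \<Longrightarrow> F p r > 0"
    and g: "\<And>p. p \<in> S \<Longrightarrow> l \<le> g p \<and> g p \<le> r \<and> F p (g p) = 0"
  shows "continuous_on S g"
  unfolding continuous_on_iff
proof (intro ballI allI impI)
  fix p e assume p: "p \<in> S" and e: "(0::real) < e"
  have cF: "continuous_on S (\<lambda>q. F q t)" if "t \<in> {l..r}" for t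
  proof -
    have "continuous_on S ((\<lambda>p. F (fst p) (snd p)) \<circ> (\<lambda>q. (q, t)))"
      by (rule continuous_on_compose) (use that in \<open>auto intro!: continuous_intros continuous_on_subset[OF cont]\<close>)
    then show ?thesis by (simp add: o_def)
  qed
  define t1 where "t1 = max l (g p - e/2)"
  define t2 where "t2 = min r (g p + e/2)"
  have gp: "l \<le> g p" "g p \<le> r" "F p (g p) = 0" using g p by auto
  have t1: "t1 \<in> {l..r}" "F p t1 < 0"
  proof -
    show "t1 \<in> {l..r}" using gp e by (auto simp: t1_def)
    show "F p t1 < 0"
    proof (cases "g p - e/2 \<le> l")
      case True then show ?thesis using sl p by (simp add: t1_def)
    next
      case False then show ?thesis using mono[of p "g p - e/2" "g p"] p gp e by (simp add: t1_def)
    qed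
  qed
  have t2: "t2 \<in> {l..r}" "F p t2 > 0"
  proof -
    show "t2 \<in> {l..r}" using gp e by (auto simp: t2_def)
    show "F p t2 > 0"
    proof (cases "g p + e/2 \<ge> r")
      case True then show ?thesis using sr p by (simp add: t2_def)
    next
      case False then show ?thesis using mono[of p "g p" "g p + e/2"] p gp e by (simp add: t2_def)
    qed
  qed
  obtain d1 where d1: "d1 > 0" "\<And>q. q \<in> S \<Longrightarrow> dist q p < d1 \<Longrightarrow> dist (F q t1) (F p t1) < - F p t1"
    using cF[OF t1(1)] p t1(2) unfolding continuous_on_iff by (metis neg_0_less_iff_less)
  obtain d2 where d2: "d2 > 0" "\<And>q. q \<in> S \<Longrightarrow> dist q p < d2 \<Longrightarrow> dist (F q t2) (F p t2) < F p t2"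
    using cF[OF t2(1)] p t2(2) unfolding continuous_on_iff by metis
  show "\<exists>d>0. \<forall>q\<in>S. dist q p < d \<longrightarrow> dist (g q) (g p) < e"
  proof (intro exI[of _ "min d1 d2"] conjI ballI impI)
    show "0 < min d1 d2" using d1 d2 by simp
    fix q assume q: "q \<in> S" "dist q p < min d1 d2"
    have Fq1: "F q t1 < 0" using d1(2)[of q] q by (auto simp: dist_real_def)
    have Fq2: "F q t2 > 0" using d2(2)[of q] q by (auto simp: dist_real_def)
    have gq: "l \<le> g q" "g q \<le> r" "F q (g q) = 0" using g q by auto
    have "g q > t1"
    proof (rule ccontr)
      assume "\<not> g q > t1"
      then have "g q = t1 \<or> g q < t1" by auto
      then show False
      proof
        assume "g q < t1" then have "F q (g q) < F q t1" using mono[of q "g q" t1] q gq t1 by auto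
        then show False using Fq1 gq by simp
      qed (use Fq1 gq in simp)
    qed
    moreover have "g q < t2"
    proof (rule ccontr)
      assume "\<not> g q < t2"
      then have "g q = t2 \<or> g q > t2" by auto
      then show False
      proof
        assume "g q > t2" then have "F q t2 < F q (g q)" using mono[of q t2 "g q"] q gq t2 by auto
        then show False using Fq2 gq by simp
      qed (use Fq2 gq in simp)
    qed
    ultimately show "dist (g q) (g p) < e" using e by (auto simp: dist_real_def t1_def t2_def abs_less_iff)
  qed
qed


definition SS :: "real \<Rightarrow> real \<Rightarrow> real \<Rightarrow> real \<Rightarrow> real \<Rightarrow> real" where
  "SS w e t0 t1 a = hh w a (t0 + a*e) - hh w a t1"

definition DS :: "real \<Rightarrow> real \<Rightarrow> real \<Rightarrow> real \<Rightarrow> real \<Rightarrow> real" where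
  "DS w e t0 t1 a = exp (a*(t0 + a*e)) * ((t0 + 2*a*e) * (pi*w*cos (pi*w*(t0 + a*e)) - a * sin (pi*w*(t0 + a*e)))
      - (pi*w*(pi*w)*e + 1) * sin (pi*w*(t0 + a*e)) - a*(pi*w)*e*cos (pi*w*(t0 + a*e)))
    - exp (a*t1) * (t1 * (pi*w*cos (pi*w*t1) - a * sin (pi*w*t1)) - sin (pi*w*t1))"

lemma SS_deriv: "((\<lambda>a. SS w e t0 t1 a) has_real_derivative DS w e t0 t1 a) (at a)"
  unfolding SS_def hh_def DS_def
  apply (rule DERIV_cong)
   apply (rule derivative_eq_intros refl)+
  apply (simp add: algebra_simps)
  done

lemma DS_cont: "continuous_on S (\<lambda>p. DS w e (4 - snd p) (snd p + c) (fst p))"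
  unfolding DS_def by (intro continuous_intros)

lemma DS_0: "DS w e t0 t1 0 = t0*(pi*w)*cos (pi*w*t0) - (pi*w*(pi*w)*e + 1) * sin (pi*w*t0)
    - t1*(pi*w)*cos (pi*w*t1) + sin (pi*w*t1)"
  unfolding DS_def by (simp add: algebra_simps)

lemma SS_0: "SS w e t0 t1 0 = pi*w*cos (pi*w*t0) - pi*w*cos (pi*w*t1)"
  unfolding SS_def hh_def by simp

lemma c1: "cos (pi*(1/2)*(4-x+d)) = cos (pi*x/2 - pi*d/2)"
proof -
  have e: "pi*(1/2)*(4-x+d) = -(pi*x/2 - pi*d/2) + 2*pi" by (simp add: algebra_simps)
  show ?thesis by (simp only: e cos_periodic cos_minus)
qed
lemma s1: "sin (pi*(1/2)*(4-x+d)) = - sin (pi*x/2 - pi*d/2)"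
proof -
  have e: "pi*(1/2)*(4-x+d) = -(pi*x/2 - pi*d/2) + 2*pi" by (simp add: algebra_simps)
  show ?thesis by (simp only: e sin_periodic sin_minus)
qed
lemma c2: "cos (pi*(3/2)*(4-x+d)) = cos (3*pi*x/2 - 3*pi*d/2)"
proof -
  have e: "pi*(3/2)*(4-x+d) = -(3*pi*x/2 - 3*pi*d/2) + 6*pi" by (simp add: field_simps)
  show ?thesis by (simp only: e cos6 cos_minus)
qed
lemma s2: "sin (pi*(3/2)*(4-x+d)) = - sin (3*pi*x/2 - 3*pi*d/2)"
proof -
  have e: "pi*(3/2)*(4-x+d) = -(3*pi*x/2 - 3*pi*d/2) + 6*pi" by (simp add: field_simps)
  show ?thesis by (simp only: e sin6 sin_minus)
qed
lemma c2': "cos (pi*(3/2)*(x+4)) = cos (3*pi*x/2)"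
proof -
  have e: "pi*(3/2)*(x+4) = 3*pi*x/2 + 6*pi" by (simp add: algebra_simps)
  show ?thesis by (simp only: e cos6)
qed
lemma s2': "sin (pi*(3/2)*(x+4)) = sin (3*pi*x/2)"
proof -
  have e: "pi*(3/2)*(x+4) = 3*pi*x/2 + 6*pi" by (simp add: algebra_simps)
  show ?thesis by (simp only: e sin6)
qed

lemma DS1_0: "DS (1/2) e (4-x) x 0 = (4-2*x)*(pi/2)*cos (pi*x/2) + ((pi/2)^2*e + 2) * sin (pi*x/2)"
proof -
  have "cos (pi*(1/2)*(4-x)) = cos (pi*x/2)" "sin (pi*(1/2)*(4-x)) = - sin (pi*x/2)"
    using c1[of x 0] s1[of x 0] by simp_all
  then show ?thesis unfolding DS_0 by (simp add: algebra_simps power2_eq_square)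
qed

lemma DS2_0: "DS (3/2) e (4-x) (x+4) 0 = -2*x*(3*pi/2)*cos (3*pi*x/2) + ((3*pi/2)^2*e + 2) * sin (3*pi*x/2)"
proof -
  have A: "cos (pi*(3/2)*(4-x)) = cos (3*pi*x/2)" using c2[of x 0] by simp
  have B: "sin (pi*(3/2)*(4-x)) = - sin (3*pi*x/2)" using s2[of x 0] by simp
  show ?thesis unfolding DS_0 A B c2' s2' by (simp add: field_simps power2_eq_square)
qed

lemma SS1_0: "SS (1/2) e (4-x) x 0 = 0"
  unfolding SS_0 using c1[of x 0] by simp
lemma SS2_0: "SS (3/2) e (4-x) (x+4) 0 = 0"
  unfolding SS_0 using c2[of x 0] c2'[of x] by simp


lemma pi_sq_bounds: "9.8696 \<le> pi^2" "pi^2 \<le> 9.8697"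
proof -
  have p: "3.1415926 \<le> pi" "pi \<le> 3.1415927" using pi_approx by auto
  have "3.1415926 * 3.1415926 \<le> pi * pi" by (rule mult_mono) (use p in auto)
  then show "9.8696 \<le> pi^2" by (simp add: power2_eq_square)
  have "pi * pi \<le> 3.1415927 * 3.1415927" by (rule mult_mono) (use p in auto)
  then show "pi^2 \<le> 9.8697" by (simp add: power2_eq_square)
qed

lemma DS1_hi_pos:
  assumes x: "x \<in> {1/2..13/20}"
  shows "DS (1/2) (-3/2) (4-x) x 0 > 0"
proof -
  have c: "1/2 \<le> cos (pi*x/2)" using cos_alpha_bounds(1)[OF x] .
  have s: "sin (pi*x/2) \<le> 1" by simp
  have "(27/10)*(pi/2)*(1/2) \<le> (4-2*x)*(pi/2)*cos (pi*x/2)"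
    using x c by (intro mult_mono) auto
  moreover have Q: "3*pi^2/8 - 2 > 0" using pi_sq_bounds by simp
  moreover have "(3*pi^2/8 - 2) * sin (pi*x/2) \<le> (3*pi^2/8 - 2)"
    using Q s by (simp add: mult_left_le)
  moreover have "(27/10)*(pi/2)*(1/2) > (3*pi^2/8 - 2)" using pi_sq_bounds pi_approx by simp
  moreover have "DS (1/2) (-3/2) (4-x) x 0 = (4-2*x)*(pi/2)*cos (pi*x/2) - (3*pi^2/8 - 2) * sin (pi*x/2)"
    unfolding DS1_0 by (simp add: algebra_simps power2_eq_square)
  ultimately show ?thesis by linarith
qed

lemma DS1_lo_neg:
  assumes x: "x \<in> {1/2..13/20}"
  shows "DS (1/2) (-3) (4-x) x 0 < 0"
proof -
  have c: "cos (pi*x/2) \<le> sqrt 2 / 2" using cos_alpha_bounds(2)[OF x] .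
  have s: "sqrt 2 / 2 \<le> sin (pi*x/2)" using cos_alpha_bounds(3)[OF x] .
  have c0: "0 \<le> cos (pi*x/2)" using cos_alpha_bounds(1)[OF x] by linarith
  have "(4-2*x)*(pi/2)*cos (pi*x/2) \<le> 3*(pi/2)*(sqrt 2/2)"
    using x c c0 by (intro mult_mono) auto
  moreover have Q: "3*pi^2/4 - 2 > 0" using pi_sq_bounds by simp
  moreover have "(3*pi^2/4 - 2) * (sqrt 2/2) \<le> (3*pi^2/4 - 2) * sin (pi*x/2)"
    using Q s by (intro mult_left_mono) auto
  moreover have "3*(pi/2)*(sqrt 2/2) < (3*pi^2/4 - 2) * (sqrt 2/2)"
  proof -
    have "3*(pi/2) < 3*pi^2/4 - 2" using pi_sq_bounds pi_approx by simp
    then show ?thesis by (intro mult_strict_right_mono) auto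
  qed
  moreover have "DS (1/2) (-3) (4-x) x 0 = (4-2*x)*(pi/2)*cos (pi*x/2) - (3*pi^2/4 - 2) * sin (pi*x/2)"
    unfolding DS1_0 by (simp add: algebra_simps power2_eq_square)
  ultimately show ?thesis by linarith
qed

lemma U1: "\<exists>al>0. \<forall>a\<in>{0<..al}. \<forall>x\<in>{1/2..13/20}. SS (1/2) (-3/2) (4-x) x a > 0"
proof (rule unif_deriv_pos[where D = "\<lambda>a x. DS (1/2) (-3/2) (4-x) x a"])
  show "continuous_on ({0..1} \<times> {1/2..13/20}) (\<lambda>p. DS (1/2) (-3/2) (4 - snd p) (snd p) (fst p))"
    unfolding DS_def by (intro continuous_intros)
next
  show "\<And>x. x \<in> {1/2..13/20} \<Longrightarrow> 0 < DS (1/2) (-3/2) (4-x) x 0" by (rule DS1_hi_pos)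
qed (simp, rule SS_deriv, rule SS1_0)

lemma U2: "\<exists>al>0. \<forall>a\<in>{0<..al}. \<forall>x\<in>{1/2..13/20}. SS (1/2) (-3) (4-x) x a < 0"
proof (rule unif_deriv_neg[where D = "\<lambda>a x. DS (1/2) (-3) (4-x) x a"])
  show "continuous_on ({0..1} \<times> {1/2..13/20}) (\<lambda>p. DS (1/2) (-3) (4 - snd p) (snd p) (fst p))"
    unfolding DS_def by (intro continuous_intros)
next
  show "\<And>x. x \<in> {1/2..13/20} \<Longrightarrow> DS (1/2) (-3) (4-x) x 0 < 0" by (rule DS1_lo_neg)
qed (simp, rule SS_deriv, rule SS1_0)

lemma dbounds: "\<exists>aU>0. aU \<le> 1/100 \<and> (\<forall>a\<in>{0<..aU}. \<forall>x\<in>{1/2..13/20}.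
   4 - x - 3*a < P_minus a x \<and> P_minus a x < 4 - x - 3/2*a)"
proof -
  obtain a1 where a1: "a1 > 0" "\<And>a x. a \<in> {0<..a1} \<Longrightarrow> x \<in> {1/2..13/20} \<Longrightarrow> SS (1/2) (-3/2) (4-x) x a > 0"
    using U1 by blast
  obtain a2 where a2: "a2 > 0" "\<And>a x. a \<in> {0<..a2} \<Longrightarrow> x \<in> {1/2..13/20} \<Longrightarrow> SS (1/2) (-3) (4-x) x a < 0"
    using U2 by blast
  show ?thesis
  proof (intro exI[of _ "min (1/100) (min a1 a2)"] conjI)
    show "0 < min (1/100) (min a1 a2)" using a1 a2 by simp
    show "min (1/100) (min a1 a2) \<le> 1/100" by simp
    show "\<forall>a\<in>{0<..min (1/100) (min a1 a2)}. \<forall>x\<in>{1/2..13/20}. 4 - x - 3*a < P_minus a x \<and> P_minus a x < 4 - x - 3/2*a"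
    proof (intro ballI conjI)
    fix a x :: real assume a: "a \<in> {0<..min (1/100) (min a1 a2)}" and x: "x \<in> {1/2..13/20}"
    have P: "2 < P_minus a x" "P_minus a x < 4" "hh (1/2) a (P_minus a x) = hh (1/2) a x"
      using Pm_char[OF x, of a] a by auto
    have hi: "hh (1/2) a (4 - x + a*(-3/2)) > hh (1/2) a x"
      using a1(2)[of a x] a x unfolding SS_def by auto
    have lo: "hh (1/2) a (4 - x + a*(-3)) < hh (1/2) a x"
      using a2(2)[of a x] a x unfolding SS_def by auto
    have r1: "4 - x + a*(-3/2) \<in> {2..4}" "4 - x + a*(-3) \<in> {2..4}" using a x by auto
    show "4 - x - 3*a < P_minus a x"
    proof (rule ccontr)
      assume "\<not> 4 - x - 3*a < P_minus a x"
      then have "P_minus a x \<le> 4 - x + a*(-3)" by simp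
      then consider "P_minus a x = 4 - x + a*(-3)" | "P_minus a x < 4 - x + a*(-3)" by linarith
      then show False
      proof cases
        case 1 then show ?thesis using lo P by simp
      next
        case 2
        have "hh (1/2) a (P_minus a x) < hh (1/2) a (4 - x + a*(-3))"
          by (rule strict_mono_onD[OF h1_inc]) (use r1 P 2 in auto)
        then show ?thesis using lo P by simp
      qed
    qed
    show "P_minus a x < 4 - x - 3/2*a"
    proof (rule ccontr)
      assume "\<not> P_minus a x < 4 - x - 3/2*a"
      then have "P_minus a x \<ge> 4 - x + a*(-3/2)" by simp
      then consider "P_minus a x = 4 - x + a*(-3/2)" | "P_minus a x > 4 - x + a*(-3/2)" by linarith
      then show False
      proof cases
        case 1 then show ?thesis using hi P by simp
      next
        case 2
        have "hh (1/2) a (P_minus a x) > hh (1/2) a (4 - x + a*(-3/2))"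
          by (rule strict_mono_onD[OF h1_inc]) (use r1 P 2 in auto)
        then show ?thesis using hi P by simp
      qed
    qed
    qed
  qed
qed


lemma sin_half_lb: fixes t :: real assumes "0 \<le> t" "t \<le> 1" shows "t/2 \<le> sin t"
proof -
  have "(\<lambda>t. sin t - t/2) 0 \<le> (\<lambda>t. sin t - t/2) t"
  proof (rule DERIV_nonneg_imp_nondecreasing[of 0 t])
    show "0 \<le> t" using assms by simp
  next
    fix s assume s: "0 \<le> s" "s \<le> t"
    have "cos s \<ge> cos (pi/3)" using s assms pi_gt3 by (intro cos_monotone_0_pi_le) auto
    then have "cos s - 1/2 \<ge> 0" using cos_60 by simp
    moreover have "((\<lambda>t. sin t - t/2) has_real_derivative (cos s - 1/2)) (at s)"
      by (auto intro!: derivative_eq_intros)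
    ultimately show "\<exists>y. ((\<lambda>t. sin t - t/2) has_real_derivative y) (at s) \<and> 0 \<le> y" by blast
  qed
  then show ?thesis by simp
qed

lemma M1:
  assumes a: "0 < a" "a \<le> 1/100" and d: "-3*a \<le> d" "d \<le> 0"
    and x: "1/2 \<le> x1" "x1 < x2" "x2 \<le> 13/20"
  shows "hh (1/2) a (4-x2+d) - hh (1/2) a x2 < hh (1/2) a (4-x1+d) - hh (1/2) a x1"
proof -
  define c where "c = a^2 + (pi*(1/2))^2"
  have c: "c > 0" by (simp add: c_def add_nonneg_pos)
  have "(\<lambda>x. hh (1/2) a (4-x+d) - hh (1/2) a x) x1 > (\<lambda>x. hh (1/2) a (4-x+d) - hh (1/2) a x) x2"
  proof (rule DERIV_neg_imp_decreasing[OF x(2)])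
    fix x assume xx: "x1 \<le> x" "x \<le> x2"
    have d1: "((\<lambda>x. hh (1/2) a (4-x+d)) has_real_derivative (-c * exp (a*(4-x+d)) * sin (pi*(1/2)*(4-x+d))) * (-1)) (at x)"
      unfolding c_def by (rule DERIV_chain2[OF hh_deriv]) (auto intro!: derivative_eq_intros)
    have d2: "(hh (1/2) a has_real_derivative (-c * exp (a*x) * sin (pi*(1/2)*x))) (at x)"
      unfolding c_def by (rule hh_deriv)
    have D: "((\<lambda>x. hh (1/2) a (4-x+d) - hh (1/2) a x) has_real_derivative
        (-c * exp (a*(4-x+d)) * sin (pi*(1/2)*(4-x+d))) * (-1) - (-c * exp (a*x) * sin (pi*(1/2)*x))) (at x)"
      by (rule DERIV_diff[OF d1 d2])
    have eq: "(-c * exp (a*(4-x+d)) * sin (pi*(1/2)*(4-x+d))) * (-1) - (-c * exp (a*x) * sin (pi*(1/2)*x))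
       = c * (exp (a*x) * sin (pi*x/2) - exp (a*(4-x+d)) * sin (pi*x/2 - pi*d/2))"
      using s1[of x d] by (simp add: algebra_simps)
    have sa: "0 < sin (pi*x/2)" using xx x by (intro sin_gt_zero) auto
    have sb: "sin (pi*x/2) \<le> sin (pi*x/2 - pi*d/2)"
    proof (rule sin_monotone_2pi_le)
      have "0 < x" using xx x by simp
      then have "0 \<le> pi*x/2" by simp
      then show "- (pi/2) \<le> pi*x/2" using pi_gt_zero by linarith
      have "pi*d \<le> 0" using d by (simp add: mult_nonneg_nonpos)
      then show "pi*x/2 \<le> pi*x/2 - pi*d/2" by simp
      have A1: "pi*x \<le> pi*(13/20)" using xx x by (intro mult_left_mono) auto
      have A2: "-(pi*d) \<le> pi*(3/100)" using mult_left_mono[of "-d" "3/100" pi] d a by simp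
      show "pi*x/2 - pi*d/2 \<le> pi/2" using A1 A2 pi_gt_zero by linarith
    qed
    have ex: "exp (a*x) < exp (a*(4-x+d))" using a d xx x by simp
    have "exp (a*x) * sin (pi*x/2) < exp (a*(4-x+d)) * sin (pi*x/2)"
      using ex sa by simp
    also have "\<dots> \<le> exp (a*(4-x+d)) * sin (pi*x/2 - pi*d/2)"
      using sb by simp
    finally have N: "c * (exp (a*x) * sin (pi*x/2) - exp (a*(4-x+d)) * sin (pi*x/2 - pi*d/2)) < 0"
      using c by (simp add: mult_pos_neg)
    show "\<exists>y. ((\<lambda>x. hh (1/2) a (4-x+d) - hh (1/2) a x) has_real_derivative y) (at x) \<and> y < 0"
      using D[unfolded eq] N by blast
  qed
  then show ?thesis by simp
qed


lemma cos_23: "cos (2*pi/3) = -1/2"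
proof -
  have "2*pi/3 = pi - pi/3" by simp
  then show ?thesis by (simp only: cos_pi_minus cos_60)
qed

lemma cos_le_half: assumes "2*pi/3 \<le> w" "w \<le> pi" shows "cos w \<le> -1/2"
  using cos_monotone_0_pi_le[of "2*pi/3" w] assms cos_23 by simp

lemma M3:
  assumes a: "0 < a" "a \<le> 1/200" and d: "-3*a \<le> d" "d \<le> -3/2*a"
    and x: "1/2 \<le> x1" "x1 < x2" "x2 \<le> 13/20"
  shows "ln (-hh (3/2) a (x1+4)) - ln (-hh (3/2) a (4-x1+d)) < ln (-hh (3/2) a (x2+4)) - ln (-hh (3/2) a (4-x2+d))"
proof -
  define c where "c = a^2 + (pi*(3/2))^2"
  have c: "c > 0" by (simp add: c_def add_nonneg_pos)
  have "(\<lambda>x. ln (-hh (3/2) a (x+4)) - ln (-hh (3/2) a (4-x+d))) x1 < (\<lambda>x. ln (-hh (3/2) a (x+4)) - ln (-hh (3/2) a (4-x+d))) x2"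
  proof (rule DERIV_pos_imp_increasing[OF x(2)])
    fix x assume xx: "x1 \<le> x" "x \<le> x2"
    define be where "be = 3*pi*x/2"
    define w where "w = 3*pi*x/2 - 3*pi*d/2"
    define p where "p = -(3*pi/2 * cos be - a * sin be)"
    define q where "q = -(3*pi/2 * cos w + a * sin w)"
    define eA where "eA = exp (a*(x+4))"
    define eB where "eB = exp (a*(4-x+d))"
    have x0: "1/2 \<le> x" "x \<le> 13/20" using xx x by auto
    have md: "-(pi*d) \<le> pi*(3*a)" using mult_left_mono[of "-d" "3*a" pi] d by simp
    have md2: "pi*(3/2*a) \<le> -(pi*d)" using mult_left_mono[of "3/2*a" "-d" pi] d by simp
    have pa: "pi*(3*a) \<le> pi*(3/200)" using a by simp
    have b1: "3*pi/4 \<le> be" using mult_left_mono[of "1/2" x pi] x0 by (simp add: be_def)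
    have b2: "be \<le> 39*pi/40" using mult_left_mono[of x "13/20" pi] x0 by (simp add: be_def)
    have t0: "w - be = -(3*pi*d/2)" by (simp add: w_def be_def)
    have tpos: "9*pi*a/4 \<le> w - be" using md2 unfolding t0 by simp
    have md3': "-(pi*d) \<le> pi*(3/200)" using mult_left_mono[of "-d" "3/200" pi] d a by simp
    have md3: "-(pi*d) \<le> 3/200*pi" using md3' by (simp add: mult.commute)
    have e3: "-(3*pi*d/2) = (3/2)*(-(pi*d))" by simp
    have tle: "w - be \<le> 1" unfolding t0 e3 using md3 pi_less_4 by linarith
    have nn: "0 \<le> 9*pi*a/4" using a by simp
    then have w1: "3*pi/4 \<le> w" using b1 tpos by linarith
    have w2: "w \<le> pi"
    proof -
      have "w = be + (3/2)*(-(pi*d))" using t0 e3 by linarith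
      then show ?thesis using b2 md3 pi_gt_zero by linarith
    qed
    have cb: "cos be \<le> -1/2" using b1 b2 by (intro cos_le_half) (auto simp: field_simps)
    have cw: "cos w \<le> -1/2" using w1 w2 by (intro cos_le_half) (auto simp: field_simps)
    have sb: "0 \<le> sin be" using b1 b2 by (intro sin_ge_zero) auto
    have sw: "0 \<le> sin w" using w1 w2 by (intro sin_ge_zero) auto
    have sb1: "sin be \<le> 1" and sw1: "sin w \<le> 1" by simp_all
    have p: "p > 0"
    proof -
      have "3*pi/2 * cos be \<le> 3*pi/2 * (-1/2)" using cb by (intro mult_left_mono) auto
      moreover have "a * sin be \<ge> 0" using a sb by simp
      ultimately show ?thesis unfolding p_def using pi_gt_zero by linarith
    qed
    have q: "q > 0"
    proof -
      have "3*pi/2 * cos w \<le> 3*pi/2 * (-1/2)" using cw by (intro mult_left_mono) auto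
      moreover have "a * sin w \<le> a" using a sw1 by (simp add: mult_left_le)
      ultimately show ?thesis unfolding q_def using a pi_gt3 by linarith
    qed
    have hA: "-hh (3/2) a (x+4) = eA * p" unfolding h2_x4 p_def eA_def be_def by (simp add: algebra_simps)
    have hB: "-hh (3/2) a (4-x+d) = eB * q" unfolding h2_refl q_def eB_def w_def by (simp add: algebra_simps)
    have PA: "-hh (3/2) a (x+4) > 0" using hA p by (simp add: eA_def)
    have PB: "-hh (3/2) a (4-x+d) > 0" using hB q by (simp add: eB_def)
    have dA: "((\<lambda>x. -hh (3/2) a (x+4)) has_real_derivative -((-c * exp (a*(x+4)) * sin (pi*(3/2)*(x+4))) * 1)) (at x)"
      unfolding c_def by (intro DERIV_minus DERIV_chain2[OF hh_deriv]) (auto intro!: derivative_eq_intros)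
    have dB: "((\<lambda>x. -hh (3/2) a (4-x+d)) has_real_derivative -((-c * exp (a*(4-x+d)) * sin (pi*(3/2)*(4-x+d))) * (-1))) (at x)"
      unfolding c_def by (intro DERIV_minus DERIV_chain2[OF hh_deriv]) (auto intro!: derivative_eq_intros)
    have dlA: "((\<lambda>x. ln (-hh (3/2) a (x+4))) has_real_derivative
        inverse (-hh (3/2) a (x+4)) * -((-c * exp (a*(x+4)) * sin (pi*(3/2)*(x+4))) * 1)) (at x)"
      by (rule DERIV_chain2[OF DERIV_ln[OF PA] dA])
    have dlB: "((\<lambda>x. ln (-hh (3/2) a (4-x+d))) has_real_derivative
        inverse (-hh (3/2) a (4-x+d)) * -((-c * exp (a*(4-x+d)) * sin (pi*(3/2)*(4-x+d))) * (-1))) (at x)"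
      by (rule DERIV_chain2[OF DERIV_ln[OF PB] dB])
    have Dall: "((\<lambda>x. ln (-hh (3/2) a (x+4)) - ln (-hh (3/2) a (4-x+d))) has_real_derivative
        inverse (-hh (3/2) a (x+4)) * -((-c * exp (a*(x+4)) * sin (pi*(3/2)*(x+4))) * 1)
        - inverse (-hh (3/2) a (4-x+d)) * -((-c * exp (a*(4-x+d)) * sin (pi*(3/2)*(4-x+d))) * (-1))) (at x)"
      by (rule DERIV_diff[OF dlA dlB])
    have eq: "inverse (-hh (3/2) a (x+4)) * -((-c * exp (a*(x+4)) * sin (pi*(3/2)*(x+4))) * 1)
        - inverse (-hh (3/2) a (4-x+d)) * -((-c * exp (a*(4-x+d)) * sin (pi*(3/2)*(4-x+d))) * (-1))
        = c * (sin be / p - sin w / q)"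
    proof -
      have "sin (pi*(3/2)*(x+4)) = sin be" using s2'[of x] by (simp add: be_def)
      moreover have "sin (pi*(3/2)*(4-x+d)) = - sin w" using s2[of x d] by (simp add: w_def)
      moreover have "exp (a*(x+4)) = eA" "exp (a*(4-x+d)) = eB" by (simp_all add: eA_def eB_def)
      moreover have "eA > 0" "eB > 0" by (simp_all add: eA_def eB_def)
      ultimately show ?thesis unfolding hA hB using p q by (simp add: field_simps)
    qed
    have key: "sin be * q - sin w * p = 3*pi/2 * sin (w - be) - 2 * a * sin be * sin w"
      unfolding p_def q_def sin_diff by (simp add: algebra_simps)
    have st: "(w - be)/2 \<le> sin (w - be)" using tpos tle nn by (intro sin_half_lb) linarith+
    have "3*pi/2 * (9*pi*a/8) \<le> 3*pi/2 * sin (w - be)"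
      using st tpos by (intro mult_left_mono) auto
    moreover have "3*pi/2 * (9*pi*a/8) = (27/16) * (pi^2 * a)" by (simp add: power2_eq_square)
    moreover have "(98696/10000) * a \<le> pi^2 * a" using pi_sq_bounds a by (intro mult_right_mono) auto
    moreover have "sin be * sin w \<le> 1" using sb sw sb1 sw1 by (simp add: mult_le_one)
    then have "2 * a * sin be * sin w \<le> 2 * a" using a by (simp add: mult_left_le)
    ultimately have "sin be * q - sin w * p > 0" unfolding key using a by linarith
    then have "sin be / p - sin w / q > 0" using p q by (simp add: field_simps)
    then have "c * (sin be / p - sin w / q) > 0" using c by simp
    then show "\<exists>y. ((\<lambda>x. ln (-hh (3/2) a (x+4)) - ln (-hh (3/2) a (4-x+d))) has_real_derivative y) (at x) \<and> 0 < y"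
      using Dall[unfolded eq] by blast
  qed
  then show ?thesis by simp
qed


lemma hh2_negs:
  assumes a: "0 < a" "a \<le> 1/200" and d: "-3*a \<le> d" "d \<le> 0"
    and x: "1/2 \<le> x" "x \<le> 13/20"
  shows "hh (3/2) a (x+4) < 0" "hh (3/2) a (4-x+d) < 0"
proof -
  define be where "be = 3*pi*x/2"
  define w where "w = 3*pi*x/2 - 3*pi*d/2"
  have b1: "3*pi/4 \<le> be" using mult_left_mono[of "1/2" x pi] x by (simp add: be_def)
  have b2: "be \<le> 39*pi/40" using mult_left_mono[of x "13/20" pi] x by (simp add: be_def)
  have md3': "-(pi*d) \<le> pi*(3/200)" using mult_left_mono[of "-d" "3/200" pi] d a by simp
  have md3: "-(pi*d) \<le> 3/200*pi" using md3' by (simp add: mult.commute)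
  have pd: "0 \<le> -(pi*d)" using d by (simp add: mult_nonneg_nonpos)
  have e3: "w = be + (3/2)*(-(pi*d))" by (simp add: w_def be_def)
  have w1: "3*pi/4 \<le> w" using b1 pd e3 by linarith
  have w2: "w \<le> pi" using e3 b2 md3 pi_gt_zero by linarith
  have cb: "cos be \<le> -1/2" using b1 b2 by (intro cos_le_half) (auto simp: field_simps)
  have cw: "cos w \<le> -1/2" using w1 w2 by (intro cos_le_half) (auto simp: field_simps)
  have sb: "0 \<le> sin be" using b1 b2 by (intro sin_ge_zero) auto
  have sw1: "sin w \<le> 1" by simp
  have p: "3*pi/2 * cos be - a * sin be < 0"
  proof -
    have "3*pi/2 * cos be \<le> 3*pi/2 * (-1/2)" using cb by (intro mult_left_mono) auto
    moreover have "a * sin be \<ge> 0" using a sb by simp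
    ultimately show ?thesis using pi_gt_zero by linarith
  qed
  have q: "3*pi/2 * cos w + a * sin w < 0"
  proof -
    have "3*pi/2 * cos w \<le> 3*pi/2 * (-1/2)" using cw by (intro mult_left_mono) auto
    moreover have "a * sin w \<le> a" using a sw1 by (simp add: mult_left_le)
    ultimately show ?thesis using a pi_gt3 by linarith
  qed
  show "hh (3/2) a (x+4) < 0" unfolding h2_x4 using p by (simp add: be_def mult_pos_neg)
  show "hh (3/2) a (4-x+d) < 0" unfolding h2_refl using q by (simp add: w_def mult_pos_neg)
qed

lemma uniq:
  assumes a: "0 < a" "a \<le> 1/200"
    and xs: "1/2 \<le> x1" "x1 < x2" "x2 \<le> 13/20"
    and Y1: "4 - x1 - 3*a < P_minus a x1" "P_minus a x1 < 4 - x1 - 3/2*a"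
    and Y2: "4 - x2 - 3*a < P_minus a x2" "P_minus a x2 < 4 - x2 - 3/2*a"
    and Z1: "hh (3/2) a (x1+4) = hh (3/2) a (P_minus a x1)"
    and Z2: "hh (3/2) a (x2+4) = hh (3/2) a (P_minus a x2)"
  shows False
proof -
  define d1 where "d1 = P_minus a x1 - 4 + x1"
  define d2 where "d2 = P_minus a x2 - 4 + x2"
  have P1: "P_minus a x1 = 4 - x1 + d1" and P2: "P_minus a x2 = 4 - x2 + d2" by (simp_all add: d1_def d2_def)
  have d1b: "-3*a < d1" "d1 < -3/2*a" using Y1 by (auto simp: d1_def)
  have d2b: "-3*a < d2" "d2 < -3/2*a" using Y2 by (auto simp: d2_def)
  have K1: "x1 \<in> {1/2..13/20}" and K2: "x2 \<in> {1/2..13/20}" using xs by auto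
  have H1: "hh (1/2) a (4 - x1 + d1) = hh (1/2) a x1" using Pm_char[OF K1, of a] a P1 by auto
  have H2: "hh (1/2) a (4 - x2 + d2) = hh (1/2) a x2" using Pm_char[OF K2, of a] a P2 by auto
  \<comment> \<open>first equation forces d1 < d2\<close>
  have m1: "hh (1/2) a (4-x2+d1) - hh (1/2) a x2 < hh (1/2) a (4-x1+d1) - hh (1/2) a x1"
    by (rule M1) (use a d1b xs in auto)
  then have lt1: "hh (1/2) a (4-x2+d1) < hh (1/2) a (4-x2+d2)" using H1 H2 by simp
  have "d1 < d2"
  proof (rule ccontr)
    assume "\<not> d1 < d2"
    then consider "d1 = d2" | "d2 < d1" by linarith
    then show False
    proof cases
      case 1 then show ?thesis using lt1 by simp
    next
      case 2
      have "hh (1/2) a (4-x2+d2) < hh (1/2) a (4-x2+d1)"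
        by (rule strict_mono_onD[OF h1_inc]) (use 2 d1b d2b xs a in auto)
      then show ?thesis using lt1 by simp
    qed
  qed
  \<comment> \<open>second equation forces d1 > d2\<close>
  have m3: "ln (-hh (3/2) a (x1+4)) - ln (-hh (3/2) a (4-x1+d1)) < ln (-hh (3/2) a (x2+4)) - ln (-hh (3/2) a (4-x2+d1))"
    by (rule M3) (use a d1b xs in auto)
  have "ln (-hh (3/2) a (x1+4)) - ln (-hh (3/2) a (4-x1+d1)) = 0" using Z1 P1 by simp
  then have "ln (-hh (3/2) a (4-x2+d1)) < ln (-hh (3/2) a (x2+4))" using m3 by simp
  moreover have "0 < -hh (3/2) a (4-x2+d1)" "0 < -hh (3/2) a (x2+4)"
    using hh2_negs[of a d1 x2] a d1b xs by auto
  ultimately have "-hh (3/2) a (4-x2+d1) < -hh (3/2) a (x2+4)" by simp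
  then have lt2: "hh (3/2) a (4-x2+d2) < hh (3/2) a (4-x2+d1)" using Z2 P2 by simp
  have "d2 < d1"
  proof (rule ccontr)
    assume "\<not> d2 < d1"
    then consider "d1 = d2" | "d1 < d2" by linarith
    then show False
    proof cases
      case 1 then show ?thesis using lt2 by simp
    next
      case 2
      have "hh (3/2) a (4-x2+d1) < hh (3/2) a (4-x2+d2)"
        by (rule strict_mono_onD[OF h2_inc]) (use 2 d1b d2b xs a in auto)
      then show ?thesis using lt2 by simp
    qed
  qed
  with \<open>d1 < d2\<close> show False by simp
qed


definition Ff :: "real \<Rightarrow> real" where
  "Ff x = 32 / (9 * pi) + (2 * x / 3) * cot (3 * pi * x / 2) + (4 - 2 * x) * cot (pi * x / 2)"

definition e1f :: "real \<Rightarrow> real" where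
  "e1f x = -((4-2*x)*(pi/2)* cos (pi*x/2) + 2* sin (pi*x/2)) / ((pi/2)^2 * sin (pi*x/2))"
definition e2f :: "real \<Rightarrow> real" where
  "e2f x = (2*x*(3*pi/2)* cos (3*pi*x/2) - 2* sin (3*pi*x/2)) / ((3*pi/2)^2 * sin (3*pi*x/2))"

lemma DS1_e: assumes "sin (pi*x/2) > 0"
  shows "DS (1/2) e (4-x) x 0 = (pi/2)^2 * sin (pi*x/2) * (e - e1f x)"
  unfolding DS1_0 e1f_def using assms by (simp add: field_simps power2_eq_square)

lemma DS2_e: assumes "sin (3*pi*x/2) > 0"
  shows "DS (3/2) e (4-x) (x+4) 0 = (3*pi/2)^2 * sin (3*pi*x/2) * (e - e2f x)"
  unfolding DS2_0 e2f_def using assms by (simp add: field_simps power2_eq_square)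

lemma e_diff: assumes "sin (pi*x/2) > 0" "sin (3*pi*x/2) > 0"
  shows "e2f x - e1f x = (2/pi) * Ff x"
  unfolding e1f_def e2f_def Ff_def cot_def using assms by (simp add: field_simps power2_eq_square)

lemma sins_pos: assumes "x \<in> {1/2..13/20}" shows "sin (pi*x/2) > 0" "sin (3*pi*x/2) > 0"
proof -
  show "sin (pi*x/2) > 0" using assms by (intro sin_gt_zero) auto
  have "3*pi*x/2 \<le> 3*pi*(13/20)/2" using assms by (intro divide_right_mono mult_left_mono) auto
  then show "sin (3*pi*x/2) > 0" using assms by (intro sin_gt_zero) auto
qed

lemma pt_sign:
  assumes x: "x \<in> {1/2..13/20}" and F: "Ff x \<noteq> 0"
  shows "\<exists>al>0. \<forall>a\<in>{0<..al}. sgn (hh (3/2) a (x+4) - hh (3/2) a (P_minus a x)) = sgn (Ff x)"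
proof -
  define e where "e = (e1f x + e2f x)/2"
  have sA: "sin (pi*x/2) > 0" and sB: "sin (3*pi*x/2) > 0" using sins_pos[OF x] by auto
  have ed: "e2f x - e1f x = (2/pi) * Ff x" using e_diff[OF sA sB] .
  have c1: "continuous_on ({0..1} \<times> {x}) (\<lambda>p. DS (1/2) e (4 - snd p) (snd p) (fst p))"
    unfolding DS_def by (intro continuous_intros)
  have c2: "continuous_on ({0..1} \<times> {x}) (\<lambda>p. DS (3/2) e (4 - snd p) (snd p + 4) (fst p))"
    unfolding DS_def by (intro continuous_intros)
  obtain aU where aU: "aU > 0" "aU \<le> 1/100" "\<And>a y. a \<in> {0<..aU} \<Longrightarrow> y \<in> {1/2..13/20} \<Longrightarrow>
      4 - y - 3*a < P_minus a y \<and> P_minus a y < 4 - y - 3/2*a"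
    using dbounds by blast
  define ae where "ae = 1/(100*(\<bar>e\<bar>+1))"
  have ae: "ae > 0" by (simp add: ae_def add_pos_nonneg)
  have sm: "\<bar>a*e\<bar> \<le> 1/100" if "0 < a" "a \<le> ae" for a
  proof -
    have "\<bar>a*e\<bar> \<le> a*(\<bar>e\<bar>+1)" using that by (simp add: abs_mult)
    also have "\<dots> \<le> ae*(\<bar>e\<bar>+1)" using that by (intro mult_right_mono) auto
    also have "\<dots> = 1/100" by (simp add: ae_def)
    finally show ?thesis .
  qed
  show ?thesis
  proof (cases "Ff x > 0")
    case True
    then have "(2/pi) * Ff x > 0" by simp
    then have "e1f x < e" "e < e2f x" using ed by (auto simp: e_def)
    then have D1: "DS (1/2) e (4-x) x 0 > 0" and D2: "DS (3/2) e (4-x) (x+4) 0 < 0"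
      unfolding DS1_e[OF sA] DS2_e[OF sB] using sA sB by (auto intro!: mult_pos_pos mult_pos_neg)
    obtain a1 where a1: "a1 > 0" "\<And>a. a \<in> {0<..a1} \<Longrightarrow> SS (1/2) e (4-x) x a > 0"
      using unif_deriv_pos[of "{x}" "\<lambda>a y. DS (1/2) e (4-y) y a" "\<lambda>a y. SS (1/2) e (4-y) y a"]
        c1 D1 SS_deriv SS1_0 by auto
    obtain a2 where a2: "a2 > 0" "\<And>a. a \<in> {0<..a2} \<Longrightarrow> SS (3/2) e (4-x) (x+4) a < 0"
      using unif_deriv_neg[of "{x}" "\<lambda>a y. DS (3/2) e (4-y) (y+4) a" "\<lambda>a y. SS (3/2) e (4-y) (y+4) a"]
        c2 D2 SS_deriv SS2_0 by auto
    show ?thesis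
    proof (intro exI[of _ "min (min a1 a2) (min aU (min (1/200) ae))"] conjI ballI)
      show "0 < min (min a1 a2) (min aU (min (1/200) ae))" using a1 a2 aU ae by simp
      fix a assume a: "a \<in> {0<..min (min a1 a2) (min aU (min (1/200) ae))}"
      have Y: "4 - x - 3*a < P_minus a x" "P_minus a x < 4 - x - 3/2*a" using aU(3)[of a x] a x by auto
      have HY: "hh (1/2) a (P_minus a x) = hh (1/2) a x" using Pm_char[OF x, of a] a aU by auto
      have S1: "hh (1/2) a (4 - x + a*e) > hh (1/2) a x" using a1(2)[of a] a unfolding SS_def by auto
      have S2: "hh (3/2) a (4 - x + a*e) < hh (3/2) a (x+4)" using a2(2)[of a] a unfolding SS_def by auto
      have ae1: "\<bar>a*e\<bar> \<le> 1/100" using sm[of a] a by auto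
      have "P_minus a x < 4 - x + a*e"
      proof (rule ccontr)
        assume "\<not> P_minus a x < 4 - x + a*e"
        then consider "P_minus a x = 4 - x + a*e" | "P_minus a x > 4 - x + a*e" by linarith
        then show False
        proof cases
          case 1 then show ?thesis using S1 HY by simp
        next
          case 2
          have "hh (1/2) a (4 - x + a*e) < hh (1/2) a (P_minus a x)"
            by (rule strict_mono_onD[OF h1_inc]) (use 2 Y x ae1 a aU in auto)
          then show ?thesis using S1 HY by simp
        qed
      qed
      then have "hh (3/2) a (P_minus a x) < hh (3/2) a (4 - x + a*e)"
        by (intro strict_mono_onD[OF h2_inc]) (use Y x ae1 a aU in auto)
      then have "hh (3/2) a (x+4) - hh (3/2) a (P_minus a x) > 0" using S2 by simp
      then show "sgn (hh (3/2) a (x+4) - hh (3/2) a (P_minus a x)) = sgn (Ff x)" using True by simp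
    qed
  next
    case False
    then have Fn: "Ff x < 0" using F by simp
    then have "(2/pi) * Ff x < 0" by (simp add: divide_neg_pos)
    then have "e2f x < e" "e < e1f x" using ed by (auto simp: e_def)
    then have D1: "DS (1/2) e (4-x) x 0 < 0" and D2: "DS (3/2) e (4-x) (x+4) 0 > 0"
      unfolding DS1_e[OF sA] DS2_e[OF sB] using sA sB by (auto intro!: mult_pos_pos mult_pos_neg)
    obtain a1 where a1: "a1 > 0" "\<And>a. a \<in> {0<..a1} \<Longrightarrow> SS (1/2) e (4-x) x a < 0"
      using unif_deriv_neg[of "{x}" "\<lambda>a y. DS (1/2) e (4-y) y a" "\<lambda>a y. SS (1/2) e (4-y) y a"]
        c1 D1 SS_deriv SS1_0 by auto
    obtain a2 where a2: "a2 > 0" "\<And>a. a \<in> {0<..a2} \<Longrightarrow> SS (3/2) e (4-x) (x+4) a > 0"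
      using unif_deriv_pos[of "{x}" "\<lambda>a y. DS (3/2) e (4-y) (y+4) a" "\<lambda>a y. SS (3/2) e (4-y) (y+4) a"]
        c2 D2 SS_deriv SS2_0 by auto
    show ?thesis
    proof (intro exI[of _ "min (min a1 a2) (min aU (min (1/200) ae))"] conjI ballI)
      show "0 < min (min a1 a2) (min aU (min (1/200) ae))" using a1 a2 aU ae by simp
      fix a assume a: "a \<in> {0<..min (min a1 a2) (min aU (min (1/200) ae))}"
      have Y: "4 - x - 3*a < P_minus a x" "P_minus a x < 4 - x - 3/2*a" using aU(3)[of a x] a x by auto
      have HY: "hh (1/2) a (P_minus a x) = hh (1/2) a x" using Pm_char[OF x, of a] a aU by auto
      have S1: "hh (1/2) a (4 - x + a*e) < hh (1/2) a x" using a1(2)[of a] a unfolding SS_def by auto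
      have S2: "hh (3/2) a (4 - x + a*e) > hh (3/2) a (x+4)" using a2(2)[of a] a unfolding SS_def by auto
      have ae1: "\<bar>a*e\<bar> \<le> 1/100" using sm[of a] a by auto
      have "P_minus a x > 4 - x + a*e"
      proof (rule ccontr)
        assume "\<not> P_minus a x > 4 - x + a*e"
        then consider "P_minus a x = 4 - x + a*e" | "P_minus a x < 4 - x + a*e" by linarith
        then show False
        proof cases
          case 1 then show ?thesis using S1 HY by simp
        next
          case 2
          have "hh (1/2) a (P_minus a x) < hh (1/2) a (4 - x + a*e)"
            by (rule strict_mono_onD[OF h1_inc]) (use 2 Y x ae1 a aU in auto)
          then show ?thesis using S1 HY by simp
        qed
      qed
      then have "hh (3/2) a (4 - x + a*e) < hh (3/2) a (P_minus a x)"
        by (intro strict_mono_onD[OF h2_inc]) (use Y x ae1 a aU in auto)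
      then have "hh (3/2) a (x+4) - hh (3/2) a (P_minus a x) < 0" using S2 by simp
      then show "sgn (hh (3/2) a (x+4) - hh (3/2) a (P_minus a x)) = sgn (Ff x)" using Fn by simp
    qed
  qed
qed


lemma angle_facts: assumes "x \<in> {1/2..13/20}"
  shows "cos (3*pi*x/2) < 0" "sin (3*pi*x/2) > 0" "cos (pi*x/2) > 0" "sin (pi*x/2) > 0"
proof -
  have b1: "3*pi/4 \<le> 3*pi*x/2" using mult_left_mono[of "1/2" x pi] assms by simp
  have b2: "3*pi*x/2 \<le> 39*pi/40" using mult_left_mono[of x "13/20" pi] assms by simp
  have "cos (3*pi*x/2) \<le> -1/2" using b1 b2 by (intro cos_le_half) (auto simp: field_simps)
  then show "cos (3*pi*x/2) < 0" by simp
  show "sin (3*pi*x/2) > 0" "sin (pi*x/2) > 0" using sins_pos[OF assms] by auto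
  show "cos (pi*x/2) > 0" using cos_alpha_bounds(1)[OF assms] by simp
qed

definition Fd :: "real \<Rightarrow> real" where
  "Fd x = (2/3) * cot (3*pi*x/2) + (- inverse ((sin (3*pi*x/2))\<^sup>2) * (3*pi/2)) * (2*x/3)
     + ((-2) * cot (pi*x/2) + (- inverse ((sin (pi*x/2))\<^sup>2) * (pi/2)) * (4 - 2*x))"

lemma Ff_deriv: assumes "sin (3*pi*x/2) \<noteq> 0" "sin (pi*x/2) \<noteq> 0"
  shows "(Ff has_real_derivative Fd x) (at x)"
proof -
  have dcb: "((\<lambda>x. cot (3*pi*x/2)) has_real_derivative (- inverse ((sin (3*pi*x/2))\<^sup>2)) * (3*pi/2)) (at x)"
    by (rule DERIV_chain2[where f=cot and g="\<lambda>x. 3*pi*x/2", OF DERIV_cot[OF assms(1)]]) (auto intro!: derivative_eq_intros)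
  have dca: "((\<lambda>x. cot (pi*x/2)) has_real_derivative (- inverse ((sin (pi*x/2))\<^sup>2)) * (pi/2)) (at x)"
    by (rule DERIV_chain2[where f=cot and g="\<lambda>x. pi*x/2", OF DERIV_cot[OF assms(2)]]) (auto intro!: derivative_eq_intros)
  have t1: "((\<lambda>x. 2*x/3) has_real_derivative 2/3) (at x)" by (auto intro!: derivative_eq_intros)
  have t2: "((\<lambda>x. 4 - 2*x) has_real_derivative -2) (at x)" by (auto intro!: derivative_eq_intros)
  have "((\<lambda>x. 32 / (9 * pi) + (2 * x / 3) * cot (3 * pi * x / 2) + (4 - 2 * x) * cot (pi * x / 2))
     has_real_derivative 0 + ((2/3) * cot (3*pi*x/2) + (- inverse ((sin (3*pi*x/2))\<^sup>2) * (3*pi/2)) * (2*x/3))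
       + ((-2) * cot (pi*x/2) + (- inverse ((sin (pi*x/2))\<^sup>2) * (pi/2)) * (4 - 2*x))) (at x)"
    by (intro DERIV_add DERIV_const DERIV_mult t1 t2 dcb dca)
  then show ?thesis unfolding Ff_def[abs_def] Fd_def by simp
qed

lemma Fd_neg: assumes "x \<in> {1/2..13/20}" shows "Fd x < 0"
proof -
  note f = angle_facts[OF assms]
  have "cot (3*pi*x/2) < 0" unfolding cot_def using f by (simp add: divide_neg_pos)
  moreover have "cot (pi*x/2) > 0" unfolding cot_def using f by simp
  moreover have "inverse ((sin (3*pi*x/2))\<^sup>2) > 0" "inverse ((sin (pi*x/2))\<^sup>2) > 0" using f by simp_all
  moreover have "2*x/3 > 0" "4 - 2*x > 0" using assms by auto
  ultimately have "(2/3) * cot (3*pi*x/2) < 0" "(- inverse ((sin (3*pi*x/2))\<^sup>2) * (3*pi/2)) * (2*x/3) < 0"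
    "(-2) * cot (pi*x/2) < 0" "(- inverse ((sin (pi*x/2))\<^sup>2) * (pi/2)) * (4 - 2*x) < 0"
    by (auto intro!: mult_neg_pos mult_pos_pos simp: mult_pos_neg)
  then show ?thesis unfolding Fd_def by linarith
qed

lemma Ff_dec: assumes "1/2 \<le> x1" "x1 < x2" "x2 \<le> 13/20" shows "Ff x2 < Ff x1"
proof (rule DERIV_neg_imp_decreasing[OF assms(2)])
  fix x assume "x1 \<le> x" "x \<le> x2"
  then have x: "x \<in> {1/2..13/20}" using assms by auto
  show "\<exists>y. (Ff has_real_derivative y) (at x) \<and> y < 0"
    using Ff_deriv[of x] angle_facts[OF x] Fd_neg[OF x] by auto
qed

lemma Ff_cont: "continuous_on {1/2..13/20} Ff"
proof (rule continuous_at_imp_continuous_on, rule ballI)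
  fix x :: real assume x: "x \<in> {1/2..13/20}"
  show "isCont Ff x" using Ff_deriv[of x] angle_facts[OF x] DERIV_isCont by auto
qed

lemma Ff_half: "Ff (1/2) > 0"
proof -
  have e1: "3 * pi * (1/2) / 2 = pi - pi/4" and e2: "pi * (1/2) / 2 = pi/4" by simp_all
  have s2: "sqrt 2 / 2 \<noteq> (0::real)" by simp
  have c1: "cot (pi/4) = 1" unfolding cot_def cos_45 sin_45 using s2 by simp
  have c2: "cot (pi - pi/4) = -1" unfolding cot_def cos_pi_minus sin_pi_minus cos_45 sin_45 using s2 by simp
  have "Ff (1/2) = 32 / (9 * pi) + (1/3) * (-1) + 3 * 1"
    unfolding Ff_def e1 e2 c1 c2 by simp
  moreover have "32 / (9*pi) > 0" by simp
  ultimately show ?thesis by linarith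
qed

lemma Ff_end: "Ff (13/20) < 0"
proof -
  have e1: "3 * pi * (13/20) / 2 = pi - pi/40" by simp
  have x: "(13/20::real) \<in> {1/2..13/20}" by simp
  have ca: "cot (pi * (13/20) / 2) \<le> 1"
  proof -
    have "cos (pi*(13/20)/2) \<le> sin (pi*(13/20)/2)" using cos_alpha_bounds[OF x] by linarith
    moreover have "sin (pi*(13/20)/2) > 0" using angle_facts[OF x] by simp
    ultimately show ?thesis unfolding cot_def by simp
  qed
  have s0: "0 < sin (pi/40)" by (rule sin_gt_zero) auto
  have s1: "sin (pi/40) \<le> pi/40" by (rule sin_x_le_x) simp
  have sq3: "1.7 \<le> sqrt (3::real)" by (rule real_le_rsqrt) (simp add: power2_eq_square)
  have c0: "cos (pi/6) \<le> cos (pi/40)" by (rule cos_monotone_0_pi_le) auto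
  then have c0': "17/20 \<le> cos (pi/40)" using sq3 cos_30 by simp
  have "pi \<le> 63/20" using pi_approx by simp
  then have "10 * sin (pi/40) \<le> cos (pi/40)" using s1 c0' by linarith
  then have "10 \<le> cos (pi/40) / sin (pi/40)" using s0 by (simp add: field_simps)
  then have cb: "cot (pi - pi/40) \<le> -10" unfolding cot_def cos_pi_minus sin_pi_minus by simp
  have p: "32 / (9*pi) \<le> 32/27"
    using pi_gt3 by (simp add: field_simps)
  have "Ff (13/20) = 32 / (9 * pi) + (13/30) * cot (pi - pi/40) + (27/10) * cot (pi * (13/20) / 2)"
    unfolding Ff_def e1 by simp
  then show ?thesis using ca cb p by linarith
qed


definition Phi :: "real \<Rightarrow> real \<Rightarrow> real" where
  "Phi x a = hh (3/2) a (x+4) - hh (3/2) a (P_minus a x)"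

lemma h1_bounds:
  assumes x: "x \<in> {1/2..13/20}" and a: "0 \<le> a" "a \<le> 1/100"
  shows "hh (1/2) a 2 < hh (1/2) a x" "hh (1/2) a x < hh (1/2) a 4"
proof -
  have hp: "hh (1/2) a x > 0" using h1_pos assms by blast
  have "hh (1/2) a x \<le> exp (a*x) * (pi/2 * cos (pi*x/2))"
    unfolding h1_x using a sin_ge_zero[of "pi*x/2"] x by (auto intro!: mult_left_mono simp: field_simps)
  also have "\<dots> < exp (4*a) * (pi/2)"
  proof -
    have "cos (pi*x/2) < 1" using cos_alpha_bounds(2)[OF x] sqrt2_less_2 by linarith
    moreover have "exp (a*x) \<le> exp (4*a)" using mult_left_mono[of x 4 a] x a by (simp add: mult.commute)
    ultimately show ?thesis using cos_alpha_bounds(1)[OF x]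
      by (intro mult_le_less_imp_less) auto
  qed
  finally show "hh (1/2) a x < hh (1/2) a 4" unfolding h1_4 by (simp add: mult.commute)
  have "pi*exp(2*a)/2 > 0" by simp
  moreover have "hh (1/2) a 2 = -(pi*exp(2*a)/2)" by (simp add: h1_2)
  ultimately show "hh (1/2) a 2 < hh (1/2) a x" using hp by linarith
qed

lemma hh_joint_cont: "continuous_on (S::real set) (\<lambda>p. hh w (f p) (g p))"
  if "continuous_on S f" "continuous_on S g"
  using that unfolding hh_def by (auto intro!: continuous_intros)

lemma Pm_cont_x:
  assumes a: "0 \<le> a" "a \<le> 1/100"
  shows "continuous_on {1/2..13/20} (\<lambda>x. P_minus a x)"
proof (rule root_cont[where F = "\<lambda>x t. hh (1/2) a t - hh (1/2) a x" and l = 2 and r = 4])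
  show "continuous_on ({1/2..13/20} \<times> {2..4}) (\<lambda>p. hh (1/2) a (snd p) - hh (1/2) a (fst p))"
    unfolding hh_def by (intro continuous_intros)
  fix p assume p: "p \<in> {1/2..13/20::real}"
  show "hh (1/2) a 2 - hh (1/2) a p < 0" "0 < hh (1/2) a 4 - hh (1/2) a p"
    using h1_bounds[OF p a] by auto
  show "2 \<le> P_minus a p \<and> P_minus a p \<le> 4 \<and> hh (1/2) a (P_minus a p) - hh (1/2) a p = 0"
    using Pm_char[OF p a] by auto
next
  fix p s t :: real assume "2 \<le> s" "s < t" "t \<le> 4"
  then show "hh (1/2) a s - hh (1/2) a p < hh (1/2) a t - hh (1/2) a p"
    using strict_mono_onD[OF h1_inc, of s t a] by auto
qed

lemma Pm_cont_a:
  assumes x: "x \<in> {1/2..13/20}"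
  shows "continuous_on {0..1/100} (\<lambda>a. P_minus a x)"
proof (rule root_cont[where F = "\<lambda>a t. hh (1/2) a t - hh (1/2) a x" and l = 2 and r = 4])
  show "continuous_on ({0..1/100} \<times> {2..4}) (\<lambda>p. hh (1/2) (fst p) (snd p) - hh (1/2) (fst p) x)"
    unfolding hh_def by (intro continuous_intros)
  fix p :: real assume p: "p \<in> {0..1/100}"
  show "hh (1/2) p 2 - hh (1/2) p x < 0" "0 < hh (1/2) p 4 - hh (1/2) p x"
    using h1_bounds[OF x, of p] p by auto
  show "2 \<le> P_minus p x \<and> P_minus p x \<le> 4 \<and> hh (1/2) p (P_minus p x) - hh (1/2) p x = 0"
    using Pm_char[OF x, of p] p by auto
next
  fix p s t :: real assume "2 \<le> s" "s < t" "t \<le> 4"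
  then show "hh (1/2) p s - hh (1/2) p x < hh (1/2) p t - hh (1/2) p x"
    using strict_mono_onD[OF h1_inc, of s t p] by auto
qed

lemma Phi_cont_x:
  assumes a: "0 \<le> a" "a \<le> 1/100"
  shows "continuous_on {1/2..13/20} (\<lambda>x. Phi x a)"
  unfolding Phi_def
  by (intro continuous_intros hh_joint_cont Pm_cont_x[OF a])

lemma Phi_cont_a:
  assumes x: "x \<in> {1/2..13/20}"
  shows "continuous_on {0..1/100} (\<lambda>a. Phi x a)"
  unfolding Phi_def
  by (intro continuous_intros hh_joint_cont Pm_cont_a[OF x])


theorem lemma2:
  shows "\<exists>a_l > 0. \<exists>xf :: real \<Rightarrow> real. \<exists>x0 \<in> I_minus.
     32 / (9 * pi) + (2 * x0 / 3) * cot (3 * pi * x0 / 2) + (4 - 2 * x0) * cot (pi * x0 / 2) = 0 \<and>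
     xf 0 = x0 \<and> continuous_on {0..<a_l} xf \<and>
     (\<forall>a \<in> {0<..<a_l}. xf a \<in> I_minus \<and> Delta (xf a) a = 0) \<and>
     (\<exists>\<delta> > 0. \<forall>a \<in> {0<..<a_l}. \<forall>x \<in> I_minus.
         \<bar>x - x0\<bar> < \<delta> \<and> Delta x a = 0 \<longrightarrow> x = xf a)"
proof -
  define K where "K = {1/2..13/20::real}"
  have "\<exists>x0. 1/2 \<le> x0 \<and> x0 \<le> 13/20 \<and> Ff x0 = 0"
    by (rule IVT2') (use Ff_half Ff_end Ff_cont in auto)
  then obtain x0 where x0': "1/2 \<le> x0" "x0 \<le> 13/20" "Ff x0 = 0" by blast
  have "x0 \<noteq> 1/2"
  proof
    assume "x0 = 1/2" then have "Ff x0 = Ff (1/2)" by (rule arg_cong)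
    then show False using x0'(3) Ff_half by linarith
  qed
  moreover have "x0 \<noteq> 13/20"
  proof
    assume "x0 = 13/20" then have "Ff x0 = Ff (13/20)" by (rule arg_cong)
    then show False using x0'(3) Ff_end by linarith
  qed
  ultimately have x0: "1/2 < x0" "x0 < 13/20" "Ff x0 = 0" using x0' by auto
  obtain aU where aU: "aU > 0" "aU \<le> 1/100" "\<And>a y. a \<in> {0<..aU} \<Longrightarrow> y \<in> {1/2..13/20} \<Longrightarrow>
      4 - y - 3*a < P_minus a y \<and> P_minus a y < 4 - y - 3/2*a"
    using dbounds by blast
  obtain al1 where al1: "al1 > 0" "\<And>a. a \<in> {0<..al1} \<Longrightarrow> sgn (Phi (1/2) a) = sgn (Ff (1/2))"
    using pt_sign[of "1/2"] Ff_half unfolding Phi_def by auto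
  obtain al2 where al2: "al2 > 0" "\<And>a. a \<in> {0<..al2} \<Longrightarrow> sgn (Phi (13/20) a) = sgn (Ff (13/20))"
    using pt_sign[of "13/20"] Ff_end unfolding Phi_def by auto
  define al where "al = min (min aU (1/200)) (min al1 al2)"
  have al: "al > 0" "al \<le> aU" "al \<le> 1/200" "al \<le> al1" "al \<le> al2" using aU al1 al2 by (auto simp: al_def)
  have PhiL: "Phi (1/2) a > 0" if "a \<in> {0<..<al}" for a
    using al1(2)[of a] that al Ff_half by (auto simp: sgn_if split: if_splits)
  have PhiR: "Phi (13/20) a < 0" if "a \<in> {0<..<al}" for a
    using al2(2)[of a] that al Ff_end by (auto simp: sgn_if split: if_splits)
  have Ybd: "4 - x - 3*a < P_minus a x \<and> P_minus a x < 4 - x - 3/2*a" if "a \<in> {0<..<al}" "x \<in> K" for a x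
    using aU(3)[of a x] that al by (auto simp: K_def)
  have uniqK: "x1 = x2" if a: "a \<in> {0<..<al}" and xs: "x1 \<in> K" "x2 \<in> K" "Phi x1 a = 0" "Phi x2 a = 0" for a x1 x2
  proof (rule ccontr)
    assume ne: "x1 \<noteq> x2"
    have Z1: "hh (3/2) a (x1+4) = hh (3/2) a (P_minus a x1)" using xs by (simp add: Phi_def)
    have Z2: "hh (3/2) a (x2+4) = hh (3/2) a (P_minus a x2)" using xs by (simp add: Phi_def)
    have a': "0 < a" "a \<le> 1/200" using a al by auto
    show False
    proof (cases "x1 < x2")
      case True
      show False
        by (rule uniq[OF a' _ True _ _ _ _ _ Z1 Z2]) (use xs Ybd[OF a, of x1] Ybd[OF a, of x2] in \<open>auto simp: K_def\<close>)
    next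
      case False
      then have lt: "x2 < x1" using ne by auto
      show False
        by (rule uniq[OF a' _ lt _ _ _ _ _ Z2 Z1]) (use xs Ybd[OF a, of x1] Ybd[OF a, of x2] in \<open>auto simp: K_def\<close>)
    qed
  qed
  have exK: "\<exists>x. x \<in> K \<and> Phi x a = 0" if a: "a \<in> {0<..<al}" for a
  proof -
    have "\<exists>x. 1/2 \<le> x \<and> x \<le> 13/20 \<and> Phi x a = 0"
      by (rule IVT2') (use PhiL[OF a] PhiR[OF a] Phi_cont_x[of a] a al in auto)
    then show ?thesis by (auto simp: K_def)
  qed
  define root where "root a = (THE x. x \<in> K \<and> Phi x a = 0)" for a
  have root: "root a \<in> K \<and> Phi (root a) a = 0" if a: "a \<in> {0<..<al}" for a
  proof -
    have "\<exists>!x. x \<in> K \<and> Phi x a = 0" using exK[OF a] uniqK[OF a] by blast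
    then show ?thesis unfolding root_def by (rule theI')
  qed
  have root_int: "1/2 < root a \<and> root a < 13/20" if a: "a \<in> {0<..<al}" for a
  proof -
    have r: "root a \<in> K" "Phi (root a) a = 0" using root[OF a] by auto
    have "root a \<noteq> 1/2"
    proof
      assume h: "root a = 1/2"
      have "Phi (root a) a = Phi (1/2) a" by (simp only: h)
      then show False using r PhiL[OF a] by linarith
    qed
    moreover have "root a \<noteq> 13/20"
    proof
      assume h: "root a = 13/20"
      have "Phi (root a) a = Phi (13/20) a" by (simp only: h)
      then show False using r PhiR[OF a] by linarith
    qed
    ultimately show ?thesis using r by (auto simp: K_def)
  qed
  have sgn_left: "Phi x a > 0" if a: "a \<in> {0<..<al}" and x: "x \<in> K" "x < root a" for a x
  proof (rule ccontr)
    assume "\<not> Phi x a > 0"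
    then have "Phi x a \<le> 0" by simp
    then have "\<exists>z. 1/2 \<le> z \<and> z \<le> x \<and> Phi z a = 0"
      using PhiL[OF a] x Phi_cont_x[of a] a al
      by (intro IVT2') (auto simp: K_def intro: continuous_on_subset)
    then obtain z where z: "1/2 \<le> z" "z \<le> x" "Phi z a = 0" by blast
    have "z \<in> K" using z x by (auto simp: K_def)
    then have "z = root a" using uniqK[OF a _ _ z(3)] root[OF a] by blast
    then show False using z x by simp
  qed
  have sgn_right: "Phi x a < 0" if a: "a \<in> {0<..<al}" and x: "x \<in> K" "root a < x" for a x
  proof (rule ccontr)
    assume "\<not> Phi x a < 0"
    then have "Phi x a \<ge> 0" by simp
    then have "\<exists>z. x \<le> z \<and> z \<le> 13/20 \<and> Phi z a = 0"
      using PhiR[OF a] x Phi_cont_x[of a] a al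
      by (intro IVT2') (auto simp: K_def intro: continuous_on_subset)
    then obtain z where z: "x \<le> z" "z \<le> 13/20" "Phi z a = 0" by blast
    have "z \<in> K" using z x by (auto simp: K_def)
    then have "z = root a" using uniqK[OF a _ _ z(3)] root[OF a] by blast
    then show False using z x by simp
  qed
  have between: "u < root a \<and> root a < v"
    if a: "a \<in> {0<..<al}" and uv: "u \<in> K" "v \<in> K" "Phi u a > 0" "Phi v a < 0" for a u v
  proof
    show "u < root a"
    proof (rule ccontr)
      assume "\<not> u < root a"
      then consider "u = root a" | "root a < u" by linarith
      then show False
      proof cases
        case 1 then show ?thesis using root[OF a] uv by simp
      next
        case 2 then show ?thesis using sgn_right[OF a uv(1)] uv by simp
      qed
    qed
    show "root a < v"
    proof (rule ccontr)
      assume "\<not> root a < v"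
      then consider "v = root a" | "v < root a" by linarith
      then show False
      proof cases
        case 1 then show ?thesis using root[OF a] uv by simp
      next
        case 2 then show ?thesis using sgn_left[OF a uv(2)] uv by simp
      qed
    qed
  qed
  have DeltaPhi: "Delta x a = 0 \<longleftrightarrow> Phi x a = 0" if a: "a \<in> {0<..<al}" and x: "x \<in> K" for a x
  proof -
    have Y: "10/3 < P_minus a x" "P_minus a x < 4" using Ybd[OF a x] a al x by (auto simp: K_def)
    show ?thesis using Delta_sign[of x a, OF _ _ _ Y] a al x aU by (auto simp: K_def Phi_def)
  qed
  define xf where "xf a = (if a = 0 then x0 else root a)" for a
  have cont: "continuous_on {0..<al} xf"
    unfolding continuous_on_iff
  proof (intro ballI allI impI)
    fix a1 e :: real assume a1: "a1 \<in> {0..<al}" and e: "0 < e"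
    show "\<exists>d>0. \<forall>a\<in>{0..<al}. dist a a1 < d \<longrightarrow> dist (xf a) (xf a1) < e"
    proof (cases "a1 = 0")
      case True
      define eps where "eps = min (e/2) (min (x0 - 1/2) (13/20 - x0))"
      have eps: "eps > 0" "eps < e" using e x0 by (auto simp: eps_def)
      define u where "u = x0 - eps"
      define v where "v = x0 + eps"
      have eps2: "eps \<le> x0 - 1/2" "eps \<le> 13/20 - x0" by (auto simp: eps_def)
      have uK: "u \<in> K" and vK: "v \<in> K" unfolding K_def u_def v_def using eps eps2 by auto
      have Fu: "Ff u > 0" using Ff_dec[of u x0] x0 uK eps by (auto simp: K_def u_def)
      have Fv: "Ff v < 0" using Ff_dec[of x0 v] x0 vK eps by (auto simp: K_def v_def)
      obtain bu where bu: "bu > 0" "\<And>a. a \<in> {0<..bu} \<Longrightarrow> sgn (Phi u a) = sgn (Ff u)"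
        using pt_sign[of u] uK Fu unfolding Phi_def K_def by auto
      obtain bv where bv: "bv > 0" "\<And>a. a \<in> {0<..bv} \<Longrightarrow> sgn (Phi v a) = sgn (Ff v)"
        using pt_sign[of v] vK Fv unfolding Phi_def K_def by auto
      show ?thesis
      proof (intro exI[of _ "min bu bv"] conjI ballI impI)
        show "0 < min bu bv" using bu bv by simp
        fix a assume a: "a \<in> {0..<al}" "dist a a1 < min bu bv"
        show "dist (xf a) (xf a1) < e"
        proof (cases "a = 0")
          case True then show ?thesis using \<open>a1 = 0\<close> e by (simp add: xf_def)
        next
          case False
          then have a0: "a \<in> {0<..<al}" using a by auto
          have "Phi u a > 0" using bu(2)[of a] a False Fu \<open>a1 = 0\<close> by (auto simp: dist_real_def sgn_if split: if_splits)
          moreover have "Phi v a < 0" using bv(2)[of a] a False Fv \<open>a1 = 0\<close> by (auto simp: dist_real_def sgn_if split: if_splits)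
          ultimately have "u < root a \<and> root a < v" using between[OF a0 uK vK] by simp
          then show ?thesis using False \<open>a1 = 0\<close> eps by (auto simp: xf_def dist_real_def u_def v_def)
        qed
      qed
    next
      case False
      then have a10: "a1 \<in> {0<..<al}" using a1 by auto
      define r where "r = root a1"
      have r: "1/2 < r" "r < 13/20" using root_int[OF a10] by (simp_all add: r_def)
      define eps where "eps = min (e/2) (min (r - 1/2) (13/20 - r))"
      have eps: "eps > 0" "eps < e" using e r by (auto simp: eps_def)
      define u where "u = r - eps"
      define v where "v = r + eps"
      have eps2: "eps \<le> r - 1/2" "eps \<le> 13/20 - r" by (auto simp: eps_def)
      have uK: "u \<in> K" and vK: "v \<in> K" unfolding K_def u_def v_def using eps eps2 by auto
      have Pu: "Phi u a1 > 0" using sgn_left[OF a10 uK] eps by (simp add: u_def r_def)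
      have Pv: "Phi v a1 < 0" using sgn_right[OF a10 vK] eps by (simp add: v_def r_def)
      have a1s: "a1 \<in> {0..1/100}" using a10 al aU by auto
      obtain d1 where d1: "d1 > 0" "\<And>a. a \<in> {0..1/100} \<Longrightarrow> dist a a1 < d1 \<Longrightarrow> dist (Phi u a) (Phi u a1) < Phi u a1"
        using Phi_cont_a[of u] uK a1s Pu unfolding continuous_on_iff K_def by metis
      obtain d2 where d2: "d2 > 0" "\<And>a. a \<in> {0..1/100} \<Longrightarrow> dist a a1 < d2 \<Longrightarrow> dist (Phi v a) (Phi v a1) < - Phi v a1"
        using Phi_cont_a[of v] vK a1s Pv unfolding continuous_on_iff K_def by (metis neg_0_less_iff_less)
      show ?thesis
      proof (intro exI[of _ "min (min d1 d2) a1"] conjI ballI impI)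
        show "0 < min (min d1 d2) a1" using d1 d2 a10 by simp
        fix a assume a: "a \<in> {0..<al}" "dist a a1 < min (min d1 d2) a1"
        have apos: "a > 0" using a by (auto simp: dist_real_def)
        have a0: "a \<in> {0<..<al}" using a apos by auto
        have as: "a \<in> {0..1/100}" using a0 al aU by auto
        have "Phi u a > 0" using d1(2)[OF as] a by (auto simp: dist_real_def)
        moreover have "Phi v a < 0" using d2(2)[OF as] a by (auto simp: dist_real_def)
        ultimately have "u < root a \<and> root a < v" using between[OF a0 uK vK] by simp
        then show "dist (xf a) (xf a1) < e" using apos False eps
          by (auto simp: xf_def dist_real_def u_def v_def r_def)
      qed
    qed
  qed
  show ?thesis
  proof (rule exI[of _ al], rule conjI[OF al(1)], rule exI[of _ xf], rule bexI[of _ x0], intro conjI)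
    show "x0 \<in> I_minus" using x0 by (simp add: I_minus_def)
    show "32 / (9 * pi) + (2 * x0 / 3) * cot (3 * pi * x0 / 2) + (4 - 2 * x0) * cot (pi * x0 / 2) = 0"
      using x0(3) by (simp add: Ff_def)
    show "xf 0 = x0" by (simp add: xf_def)
    show "continuous_on {0..<al} xf" by (rule cont)
    show "\<forall>a\<in>{0<..<al}. xf a \<in> I_minus \<and> Delta (xf a) a = 0"
    proof
      fix a assume a: "a \<in> {0<..<al}"
      have "xf a = root a" using a by (simp add: xf_def)
      moreover have "root a \<in> K" "Phi (root a) a = 0" using root[OF a] by auto
      ultimately show "xf a \<in> I_minus \<and> Delta (xf a) a = 0"
        using DeltaPhi[OF a] by (auto simp: K_def I_minus_def)
    qed
    show "\<exists>\<delta>>0. \<forall>a\<in>{0<..<al}. \<forall>x\<in>I_minus. \<bar>x - x0\<bar> < \<delta> \<and> Delta x a = 0 \<longrightarrow> x = xf a"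
    proof (intro exI[of _ "min (x0 - 1/2) (13/20 - x0)"] conjI ballI impI)
      show "0 < min (x0 - 1/2) (13/20 - x0)" using x0 by simp
      fix a x assume a: "a \<in> {0<..<al}" and x: "x \<in> I_minus" and h: "\<bar>x - x0\<bar> < min (x0 - 1/2) (13/20 - x0) \<and> Delta x a = 0"
      have xK: "x \<in> K" using h by (auto simp: K_def abs_less_iff)
      have "Phi x a = 0" using DeltaPhi[OF a xK] h by simp
      then have "x = root a" using uniqK[OF a xK] root[OF a] by blast
      then show "x = xf a" using a by (simp add: xf_def)
    qed
  qed
qed


end
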